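(* Let $G$ be a bridgeless non-bipartite cubic graph and let $g$ be its odd-girth. Then $$\phi_{\mathbb{C}}(G) \geq \begin{cases} 1 + 2\sin\left(\frac{\pi}{6}\cdot\frac{g}{g-1}\right) & \text{if } g \equiv 1 \text{ or } 3 \pmod 6,\\ 1 + 2\sin\left(\frac{\pi}{6}\cdot\frac{g+1}{g}\right) & \text{if } g \equiv 5 \pmod 6.\end{cases}$$
   Context: The odd-girth of a non-bipartite graph is the length of a shortest odd cycle in it. For a real number $r \geq 2$, a complex nowhere-zero $r$-flow on a graph $G$ is an orientation of $G$ together with a map $\varphi\colon E(G)\to\mathbb{C}$ such that $1 \le |\varphi(e)| \le r-1$ for every edge $e$ and, at every vertex, the sum of the values on incoming edges equals the sum of the values on outgoing edges. For a bridgeless graph $G$, the complex flow number $\phi_{\mathbb{C}}(G)$ is the minimum (equivalently infimum; it is attained) of the real numbers $r\ge 2$ such that $G$ admits a complex nowhere-zero $r$-flow. *)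

theory Defs
  imports "HOL-Analysis.Analysis"
begin

text \<open>A finite multigraph (parallel edges and loops allowed) is given by a vertex set V,
  an edge set E and a map ends assigning to each edge its two (unordered) endpoints,
  listed in an arbitrary reference order.\<close>

definition graph :: "'v set \<Rightarrow> 'e set \<Rightarrow> ('e \<Rightarrow> 'v \<times> 'v) \<Rightarrow> bool" where
  "graph V E ends \<longleftrightarrow> finite V \<and> finite E \<and>
     (\<forall>e\<in>E. fst (ends e) \<in> V \<and> snd (ends e) \<in> V)"

definition degree :: "'e set \<Rightarrow> ('e \<Rightarrow> 'v \<times> 'v) \<Rightarrow> 'v \<Rightarrow> nat" where
  "degree E ends v = card {e\<in>E. fst (ends e) = v} + card {e\<in>E. snd (ends e) = v}"

definition cubic :: "'v set \<Rightarrow> 'e set \<Rightarrow> ('e \<Rightarrow> 'v \<times> 'v) \<Rightarrow> bool" where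
  "cubic V E ends \<longleftrightarrow> graph V E ends \<and> (\<forall>v\<in>V. degree E ends v = 3)"

definition adj :: "'e set \<Rightarrow> ('e \<Rightarrow> 'v \<times> 'v) \<Rightarrow> ('v \<times> 'v) set" where
  "adj F ends = {(x, y). \<exists>e\<in>F. ends e = (x, y) \<or> ends e = (y, x)}"

definition is_bridge :: "'e set \<Rightarrow> ('e \<Rightarrow> 'v \<times> 'v) \<Rightarrow> 'e \<Rightarrow> bool" where
  "is_bridge E ends e \<longleftrightarrow> e \<in> E \<and> ends e \<notin> (adj (E - {e}) ends)\<^sup>*"

definition bridgeless :: "'e set \<Rightarrow> ('e \<Rightarrow> 'v \<times> 'v) \<Rightarrow> bool" where
  "bridgeless E ends \<longleftrightarrow> (\<forall>e\<in>E. \<not> is_bridge E ends e)"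

definition bipartite :: "'v set \<Rightarrow> 'e set \<Rightarrow> ('e \<Rightarrow> 'v \<times> 'v) \<Rightarrow> bool" where
  "bipartite V E ends \<longleftrightarrow>
     (\<exists>A\<subseteq>V. \<forall>e\<in>E. (fst (ends e) \<in> A) \<noteq> (snd (ends e) \<in> A))"

definition has_cycle :: "'e set \<Rightarrow> ('e \<Rightarrow> 'v \<times> 'v) \<Rightarrow> nat \<Rightarrow> bool" where
  "has_cycle E ends k \<longleftrightarrow> k \<ge> 1 \<and>
     (\<exists>vs :: nat \<Rightarrow> 'v. \<exists>es :: nat \<Rightarrow> 'e.
        inj_on vs {..<k} \<and> inj_on es {..<k} \<and>
        (\<forall>i<k. es i \<in> E \<and>
           (ends (es i) = (vs i, vs (Suc i mod k)) \<or> ends (es i) = (vs (Suc i mod k), vs i))))"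

definition odd_girth :: "'e set \<Rightarrow> ('e \<Rightarrow> 'v \<times> 'v) \<Rightarrow> nat" where
  "odd_girth E ends = (LEAST k. odd k \<and> has_cycle E ends k)"

definition head :: "('e \<Rightarrow> 'v \<times> 'v) \<Rightarrow> ('e \<Rightarrow> bool) \<Rightarrow> 'e \<Rightarrow> 'v" where
  "head ends ori e = (if ori e then snd (ends e) else fst (ends e))"

definition tail :: "('e \<Rightarrow> 'v \<times> 'v) \<Rightarrow> ('e \<Rightarrow> bool) \<Rightarrow> 'e \<Rightarrow> 'v" where
  "tail ends ori e = (if ori e then fst (ends e) else snd (ends e))"

definition complex_nz_flow ::
  "'v set \<Rightarrow> 'e set \<Rightarrow> ('e \<Rightarrow> 'v \<times> 'v) \<Rightarrow> real \<Rightarrow> ('e \<Rightarrow> bool) \<Rightarrow> ('e \<Rightarrow> complex) \<Rightarrow> bool" where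
  "complex_nz_flow V E ends r ori \<phi> \<longleftrightarrow>
     (\<forall>e\<in>E. 1 \<le> cmod (\<phi> e) \<and> cmod (\<phi> e) \<le> r - 1) \<and>
     (\<forall>v\<in>V. (\<Sum>e\<in>{e\<in>E. head ends ori e = v}. \<phi> e) = (\<Sum>e\<in>{e\<in>E. tail ends ori e = v}. \<phi> e))"

definition complex_flow_number :: "'v set \<Rightarrow> 'e set \<Rightarrow> ('e \<Rightarrow> 'v \<times> 'v) \<Rightarrow> real" where
  "complex_flow_number V E ends =
     Inf {r. r \<ge> 2 \<and> (\<exists>ori \<phi>. complex_nz_flow V E ends r ori \<phi>)}"

end

theory Submission
  imports Defs "HOL-Analysis.Analysis"
begin

lemma norm_sq_diff: "(cmod (P - Q))^2 = (cmod P)^2 + (cmod Q)^2 - 2 * Re (Q * cnj P)"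
  unfolding cmod_power2 by (simp add: power2_eq_square algebra_simps)

lemma polar_form: "z = of_real (cmod z) * cis (Arg z)"
proof (cases "z = 0")
  case False
  then show ?thesis by (simp add: cis_Arg sgn_div_norm scaleR_conv_of_real)
qed simp

lemma cos_abs_Arg:
  assumes "P \<noteq> 0" "Q \<noteq> 0"
  shows "cmod P * cmod Q * cos \<bar>Arg (Q/P)\<bar> = Re (Q * cnj P)"
proof -
  define z where "z = Q / P"
  have "Re z = cmod z * cos (Arg z)"
    by (subst polar_form) simp
  moreover have "Q * cnj P = z * of_real ((cmod P)^2)"
  proof -
    have "of_real ((cmod P)^2) = P * cnj P" by (rule complex_norm_square)
    then show ?thesis using assms by (simp add: z_def)
  qed
  ultimately have "Re (Q * cnj P) = (cmod P)^2 * (cmod z * cos (Arg z))"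
    by simp
  also have "cmod z = cmod Q / cmod P" by (simp add: z_def norm_divide)
  finally show ?thesis using assms by (simp add: z_def power2_eq_square field_simps)
qed

lemma polar_dist:
  "(cmod (of_real A * cis a - of_real B * cis b))^2 = A^2 + B^2 - 2*A*B*cos(a - b)"
proof -
  have "(cmod (of_real A * cis a - of_real B * cis b))^2
     = (A * cos a - B * cos b)^2 + (A * sin a - B * sin b)^2"
    by (simp add: cmod_power2)
  also have "\<dots> = A^2 + B^2 - 2*A*B*(cos a * cos b + sin a * sin b)"
    using sin_cos_squared_add3[of a] sin_cos_squared_add3[of b]
    by algebra
  also have "cos a * cos b + sin a * sin b = cos (a - b)" by (simp add: cos_diff)
  finally show ?thesis by simp
qed

lemma affine_norm_le:
  fixes A B :: complex
  assumes "l \<le> t" "t \<le> h" "cmod (A + of_real l * B) \<le> M" "cmod (A + of_real h * B) \<le> M"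
  shows "cmod (A + of_real t * B) \<le> M"
proof (cases "l = h")
  case True
  then show ?thesis using assms by (metis order_antisym)
next
  case False
  hence lh: "l < h" using assms by linarith
  define p where "p = (h - t) / (h - l)"
  define q where "q = (t - l) / (h - l)"
  have p0: "0 \<le> p" and q0: "0 \<le> q" using assms lh by (auto simp: p_def q_def)
  have pq: "p + q = 1" using lh unfolding p_def q_def by (simp add: add_divide_distrib[symmetric])
  have "p * l + q * h = ((h - t) * l + (t - l) * h) / (h - l)"
    by (simp add: p_def q_def add_divide_distrib)
  also have "(h - t) * l + (t - l) * h = t * (h - l)" by (simp add: algebra_simps)
  finally have tt: "t = p * l + q * h" using lh by simp
  have "A + of_real t * B = of_real p * (A + of_real l * B) + of_real q * (A + of_real h * B)"
  proof -
    have "of_real p * (A + of_real l * B) + of_real q * (A + of_real h * B)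
        = of_real (p + q) * A + of_real (p * l + q * h) * B"
      by (simp add: algebra_simps)
    then show ?thesis using pq tt by simp
  qed
  also have "cmod \<dots> \<le> p * cmod (A + of_real l * B) + q * cmod (A + of_real h * B)"
    using p0 q0 by (metis (no_types) norm_triangle_le norm_mult norm_of_real abs_of_nonneg order_refl)
  also have "\<dots> \<le> p * M + q * M"
    using assms p0 q0 by (intro add_mono mult_left_mono) auto
  also have "\<dots> = (p + q) * M" by (simp add: algebra_simps)
  also have "\<dots> = M" using pq by simp
  finally show ?thesis .
qed

lemma lam_props:
  assumes x1: "pi/6 \<le> x" and x2: "x \<le> pi/4" and r1: "1 \<le> r" and r2: "r \<le> 2 * sin x"
  shows "r * sin (arcsin (sin x / r)) = sin x"
    and "r * cos (arcsin (sin x / r)) = sqrt (r^2 - (sin x)^2)"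
    and "pi/6 \<le> arcsin (sin x / r)" and "arcsin (sin x / r) \<le> x"
proof -
  have s0: "0 < sin x" using x1 x2 pi_gt_zero by (intro sin_gt_zero) linarith+
  have s1: "sin x \<le> 1" by simp
  have r0: "0 < r" using r1 by linarith
  have y1: "sin x / r \<le> sin x" using s0 r1 by (simp add: divide_le_eq mult_le_cancel_left1 le_divide_eq)
  have y0: "1/2 \<le> sin x / r" using r2 r0 by (simp add: le_divide_eq)
  have ym: "-1 \<le> sin x / r" "sin x / r \<le> 1" using y0 y1 s1 by linarith+
  show "r * sin (arcsin (sin x / r)) = sin x" using ym r0 by simp
  have "r * cos (arcsin (sin x / r)) = r * sqrt (1 - (sin x / r)^2)"
    using ym by (simp add: cos_arcsin)
  also have "\<dots> = sqrt (r^2) * sqrt (1 - (sin x / r)^2)" using r0 by simp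
  also have "\<dots> = sqrt (r^2 - (sin x)^2)"
    by (subst real_sqrt_mult[symmetric]) (use r0 in \<open>simp add: power2_eq_square field_simps\<close>)
  finally show "r * cos (arcsin (sin x / r)) = sqrt (r^2 - (sin x)^2)" .
  have "pi/6 = arcsin (1/2)" by (subst sin_30[symmetric], rule arcsin_sin[symmetric]) (auto simp: pi_gt_zero)
  also have "\<dots> \<le> arcsin (sin x / r)" using y0 ym by (intro arcsin_le_arcsin) auto
  finally show "pi/6 \<le> arcsin (sin x / r)" .
  have "arcsin (sin x / r) \<le> arcsin (sin x)" using y1 ym s1 by (intro arcsin_le_arcsin) auto
  also have "\<dots> = x" using x1 x2 by (intro arcsin_sin) (auto simp: pi_gt_zero)
  finally show "arcsin (sin x / r) \<le> x" .
qed

lemma amgm_sqrt: "0 \<le> A \<Longrightarrow> 0 \<le> B \<Longrightarrow> sqrt A * sqrt B \<le> (A + B) / 2"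
proof -
  assume A: "0 \<le> A" and B: "0 \<le> B"
  have "0 \<le> (sqrt A - sqrt B)^2" by simp
  also have "(sqrt A - sqrt B)^2 = A + B - 2 * (sqrt A * sqrt B)"
    using A B by (simp add: power2_diff)
  finally show ?thesis by simp
qed

lemma abs_Arg_le_pi: "\<bar>Arg z\<bar> \<le> pi"
  using mpi_less_Arg[of z] Arg_le_pi[of z] by linarith

lemma cmod_le_1_of_sq: "(cmod z)^2 \<le> 1 \<Longrightarrow> cmod z \<le> 1"
  by (metis norm_ge_zero one_power2 power2_le_imp_le zero_le_one)

lemma S1:
  assumes x1: "pi/6 \<le> x" and x2: "x \<le> pi/4"
    and P: "cmod P = a" and Q: "cmod Q = b"
    and a1: "1 \<le> a" and a2: "a \<le> 2 * sin x" and b1: "1 \<le> b" and b2: "b \<le> 2 * sin x"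
    and d: "cmod (P - Q) \<le> 2 * sin x"
  shows "\<bar>Arg (Q/P)\<bar> \<le> arcsin (sin x / a) + arcsin (sin x / b)"
proof -
  define la where "la = arcsin (sin x / a)"
  define lb where "lb = arcsin (sin x / b)"
  define th where "th = \<bar>Arg (Q/P)\<bar>"
  have P0: "P \<noteq> 0" and Q0: "Q \<noteq> 0" using P Q a1 b1 by auto
  have ab0: "0 < a * b" using a1 b1 by simp
  have s0: "0 < sin x" using x1 x2 pi_gt_zero by (intro sin_gt_zero) linarith+
  have la: "a * sin la = sin x" "a * cos la = sqrt (a^2 - (sin x)^2)" "pi/6 \<le> la" "la \<le> x"
    using lam_props[OF x1 x2 a1 a2] by (simp_all add: la_def)
  have lb: "b * sin lb = sin x" "b * cos lb = sqrt (b^2 - (sin x)^2)" "pi/6 \<le> lb" "lb \<le> x"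
    using lam_props[OF x1 x2 b1 b2] by (simp_all add: lb_def)
  have th_eq: "a * b * cos th = (a^2 + b^2 - (cmod (P - Q))^2) / 2"
    using cos_abs_Arg[OF P0 Q0] norm_sq_diff[of P Q] P Q by (simp add: th_def)
  have "a * b * cos (la + lb) = (a * cos la) * (b * cos lb) - (a * sin la) * (b * sin lb)"
    by (simp add: cos_add algebra_simps)
  also have "\<dots> = sqrt (a^2 - (sin x)^2) * sqrt (b^2 - (sin x)^2) - (sin x)^2"
    using la lb by (simp add: power2_eq_square)
  also have "\<dots> \<le> ((a^2 - (sin x)^2) + (b^2 - (sin x)^2)) / 2 - (sin x)^2"
  proof -
    have "(sin x)^2 \<le> a^2" "(sin x)^2 \<le> b^2"
      using a1 b1 s0 by (auto intro!: power_mono order_trans[OF sin_le_one])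
    then show ?thesis using amgm_sqrt[of "a^2 - (sin x)^2" "b^2 - (sin x)^2"] by simp
  qed
  also have "\<dots> \<le> (a^2 + b^2 - (cmod (P - Q))^2) / 2"
  proof -
    have "(cmod (P - Q))^2 \<le> (2 * sin x)^2" using d by (intro power_mono) auto
    then show ?thesis by (simp add: power_mult_distrib field_simps)
  qed
  finally have h1: "a * b * cos (la + lb) \<le> (a^2 + b^2 - (cmod (P - Q))^2) / 2" .
  have "a * b * cos (la + lb) \<le> a * b * cos th" using h1 th_eq by linarith
  hence "cos (la + lb) \<le> cos th" using ab0 by (simp add: mult_le_cancel_left_pos)
  moreover have "0 \<le> th" "th \<le> pi" using abs_Arg_le_pi by (auto simp: th_def)
  moreover have "0 \<le> la + lb" "la + lb \<le> pi" using la lb x2 pi_gt_zero by linarith+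
  ultimately show ?thesis using cos_mono_le_eq[of "la + lb" th] by (simp add: la_def lb_def th_def)
qed

lemma cis_x_Complex: "Complex (cos x) (sin x) = cis x"
  by (simp add: complex_eq_iff)

lemma box_corners:
  assumes x1: "pi/6 \<le> x" and x2: "x \<le> pi/4"
    and t: "t = cos x \<or> t = sqrt 3 * sin x" and u: "u = cos x \<or> u = sqrt 3 * sin x"
  shows "cmod (cis (-(x - pi/6)) * Complex t (sin x) - cis (x - pi/6) * Complex u (- sin x)) \<le> 1"
proof -
  define w where "w = x - pi/6"
  define s where "s = sin x"
  have s0: "0 < s" unfolding s_def using x1 x2 pi_gt_zero by (intro sin_gt_zero) linarith+
  have Tc: "Complex (sqrt 3 * s) s = of_real (2 * s) * cis (pi/6)"
    by (simp add: complex_eq_iff cos_30 sin_30)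
  have Tc': "Complex (sqrt 3 * s) (-s) = of_real (2 * s) * cis (-(pi/6))"
    by (simp add: complex_eq_iff cos_30 sin_30)
  have cc: "Complex (cos x) s = of_real 1 * cis x" by (simp add: complex_eq_iff s_def)
  have cc': "Complex (cos x) (-s) = of_real 1 * cis (-x)" by (simp add: complex_eq_iff s_def)
  obtain A a where Aa: "cis (-w) * Complex t s = of_real A * cis a"
      and Acase: "(A = 1 \<and> a = pi/6) \<or> (A = 2 * s \<and> a = pi/3 - x)"
  proof (cases "t = cos x")
    case True
    have "cis (-w) * Complex t s = of_real 1 * cis (pi/6)"
      using True by (simp add: cc cis_mult w_def)
    then show ?thesis using that by blast
  next
    case False
    hence "t = sqrt 3 * s" using t s_def by simp
    hence "cis (-w) * Complex t s = of_real (2 * s) * (cis (-w) * cis (pi/6))"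
      by (simp add: Tc)
    also have "cis (-w) * cis (pi/6) = cis (pi/3 - x)"
    proof -
      have "-w + pi/6 = pi/3 - x" by (simp add: w_def)
      then show ?thesis by (simp add: cis_mult)
    qed
    finally have "cis (-w) * Complex t s = of_real (2 * s) * cis (pi/3 - x)" .
    then show ?thesis using that by blast
  qed
  obtain B b where Bb: "cis w * Complex u (-s) = of_real B * cis b"
      and Bcase: "(B = 1 \<and> b = -(pi/6)) \<or> (B = 2 * s \<and> b = x - pi/3)"
  proof (cases "u = cos x")
    case True
    have "cis w * Complex u (-s) = of_real 1 * cis (-(pi/6))"
      using True by (simp add: cc' cis_mult w_def)
    then show ?thesis using that by blast
  next
    case False
    hence "u = sqrt 3 * s" using u s_def by simp
    hence "cis w * Complex u (-s) = of_real (2 * s) * (cis w * cis (-(pi/6)))"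
      by (simp add: Tc')
    also have "cis w * cis (-(pi/6)) = cis (x - pi/3)"
    proof -
      have "w + -(pi/6) = x - pi/3" by (simp add: w_def)
      then show ?thesis by (simp add: cis_mult)
    qed
    finally have "cis w * Complex u (-s) = of_real (2 * s) * cis (x - pi/3)" .
    then show ?thesis using that by blast
  qed
  have sq: "(cmod (of_real A * cis a - of_real B * cis b))^2 \<le> 1"
  proof -
    have cpi: "cos (pi/2 - x) = s" by (simp add: cos_diff s_def)
    have c60: "cos (pi/6 - - (pi/6)) = 1/2" using cos_60 by simp
    consider "A = 1" "a = pi/6" "B = 1" "b = -(pi/6)"
      | "A = 1" "a = pi/6" "B = 2 * s" "b = x - pi/3"
      | "A = 2 * s" "a = pi/3 - x" "B = 1" "b = -(pi/6)"
      | "A = 2 * s" "a = pi/3 - x" "B = 2 * s" "b = x - pi/3"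
      using Acase Bcase by blast
    then show ?thesis
    proof cases
      case 1
      then show ?thesis by (simp only: 1 polar_dist c60) simp
    next
      case 2
      have e: "pi/6 - (x - pi/3) = pi/2 - x" by simp
      show ?thesis by (simp only: 2 polar_dist e cpi) (simp add: power2_eq_square)
    next
      case 3
      have e: "pi/3 - x - - (pi/6) = pi/2 - x" by simp
      show ?thesis by (simp only: 3 polar_dist e cpi) (simp add: power2_eq_square)
    next
      case 4
      define v where "v = pi/3 - x"
      have e: "pi/3 - x - (x - pi/3) = 2 * v" by (simp add: v_def)
      have "(cmod (of_real A * cis a - of_real B * cis b))^2 = 8 * s^2 - 8 * s^2 * cos (2 * v)"
        by (simp only: 4 polar_dist e) (simp add: power2_eq_square)
      also have "\<dots> = (4 * s * sin v)^2" unfolding cos_double_sin by (simp add: power2_eq_square algebra_simps)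
      also have "sin v = sqrt 3 / 2 * cos x - s / 2"
        by (simp add: v_def sin_diff sin_60 cos_60 s_def)
      also have "4 * s * (sqrt 3 / 2 * cos x - s / 2) = 2 * sqrt 3 * s * cos x - 2 * s^2"
        by (simp add: algebra_simps power2_eq_square)
      finally have eq: "(cmod (of_real A * cis a - of_real B * cis b))^2 = (2 * sqrt 3 * s * cos x - 2 * s^2)^2" .
      have s2: "s^2 \<le> 1/2"
      proof -
        have "s \<le> sin (pi/4)" unfolding s_def using x1 x2 pi_gt_zero by (intro sin_monotone_2pi_le) auto
        hence "s^2 \<le> (sqrt 2 / 2)^2" using s0 by (simp add: sin_45 power_mono)
        then show ?thesis by (simp add: power_divide)
      qed
      have c0: "0 \<le> cos x" using x1 x2 pi_gt_zero by (intro cos_ge_zero) linarith+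
      have up: "2 * sqrt 3 * s * cos x - 2 * s^2 \<le> 1"
      proof -
        have "0 \<le> (cos x - sqrt 3 * s)^2" by simp
        hence "2 * sqrt 3 * s * cos x \<le> (cos x)^2 + 3 * s^2"
          by (simp add: power2_diff power_mult_distrib algebra_simps)
        moreover have "(cos x)^2 = 1 - s^2" by (simp add: s_def cos_squared_eq)
        ultimately show ?thesis by simp
      qed
      have lo: "-1 \<le> 2 * sqrt 3 * s * cos x - 2 * s^2"
      proof -
        have "0 \<le> 2 * sqrt 3 * s * cos x" using s0 c0 by simp
        then show ?thesis using s2 by linarith
      qed
      show ?thesis unfolding eq using up lo by (simp add: abs_square_le_1)
    qed
  qed
  have "cis (-(x - pi/6)) * Complex t (sin x) - cis (x - pi/6) * Complex u (- sin x)
      = of_real A * cis a - of_real B * cis b"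
    using Aa Bb by (simp add: w_def s_def)
  then show ?thesis using cmod_le_1_of_sq[OF sq] by simp
qed

lemma box:
  assumes x1: "pi/6 \<le> x" and x2: "x \<le> pi/4"
    and t1: "cos x \<le> t" and t2: "t \<le> sqrt 3 * sin x"
    and u1: "cos x \<le> u" and u2: "u \<le> sqrt 3 * sin x"
  shows "cmod (cis (-(x - pi/6)) * Complex t (sin x) - cis (x - pi/6) * Complex u (- sin x)) \<le> 1"
proof -
  define w where "w = x - pi/6"
  define K where "K = cis (-w) * Complex 0 (sin x) - cis w * Complex 0 (- sin x)"
  have E: "cis (-w) * Complex t' (sin x) - cis w * Complex u' (- sin x)
      = (K - of_real u' * cis w) + of_real t' * cis (-w)" for t' u'
    by (simp add: complex_eq_iff K_def algebra_simps)
  have E2: "cis (-w) * Complex t' (sin x) - cis w * Complex u' (- sin x)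
      = (K + of_real t' * cis (-w)) + of_real u' * (- cis w)" for t' u'
    by (simp add: complex_eq_iff K_def algebra_simps)
  have corner: "cmod (cis (-w) * Complex t' (sin x) - cis w * Complex u' (- sin x)) \<le> 1"
    if "t' = cos x \<or> t' = sqrt 3 * sin x" "u' = cos x \<or> u' = sqrt 3 * sin x" for t' u'
    using box_corners[OF x1 x2 that] by (simp add: w_def)
  have edge: "cmod (cis (-w) * Complex t (sin x) - cis w * Complex u' (- sin x)) \<le> 1"
    if "u' = cos x \<or> u' = sqrt 3 * sin x" for u'
    unfolding E
    by (rule affine_norm_le[OF t1 t2]) (use corner[OF disjI1[OF refl] that] corner[OF disjI2[OF refl] that] in \<open>simp_all only: E[symmetric]\<close>)
  have "cmod (cis (-w) * Complex t (sin x) - cis w * Complex u (- sin x)) \<le> 1"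
    unfolding E2
    by (rule affine_norm_le[OF u1 u2]) (use edge[OF disjI1[OF refl]] edge[OF disjI2[OF refl]] in \<open>simp_all only: E2[symmetric]\<close>)
  then show ?thesis by (simp add: w_def)
qed

lemma t_range:
  assumes x1: "pi/6 \<le> x" and x2: "x \<le> pi/4" and a1: "1 \<le> a" and a2: "a \<le> 2 * sin x"
  shows "cos x \<le> sqrt (a^2 - (sin x)^2)" "sqrt (a^2 - (sin x)^2) \<le> sqrt 3 * sin x"
proof -
  have s0: "0 < sin x" using x1 x2 pi_gt_zero by (intro sin_gt_zero) linarith+
  have c0: "0 \<le> cos x" using x1 x2 pi_gt_zero by (intro cos_ge_zero) linarith+
  have "cos x = sqrt (1 - (sin x)^2)" using c0 by (simp add: cos_squared_eq[symmetric])
  also have "\<dots> \<le> sqrt (a^2 - (sin x)^2)" using a1 by (simp add: one_le_power)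
  finally show "cos x \<le> sqrt (a^2 - (sin x)^2)" .
  have "a^2 \<le> (2 * sin x)^2" using a1 a2 by (intro power_mono) auto
  hence "sqrt (a^2 - (sin x)^2) \<le> sqrt (3 * (sin x)^2)" by (simp add: power_mult_distrib)
  also have "\<dots> = sqrt 3 * sin x" using s0 by (simp add: real_sqrt_mult)
  finally show "sqrt (a^2 - (sin x)^2) \<le> sqrt 3 * sin x" .
qed

lemma S2:
  assumes x1: "pi/6 \<le> x" and x2: "x \<le> pi/4"
    and P: "cmod P = a" and Q: "cmod Q = b"
    and a1: "1 \<le> a" and a2: "a \<le> 2 * sin x" and b1: "1 \<le> b" and b2: "b \<le> 2 * sin x"
    and d: "1 \<le> cmod (P - Q)"
  shows "arcsin (sin x / a) + arcsin (sin x / b) - 2 * (x - pi/6) \<le> \<bar>Arg (Q/P)\<bar>"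
proof -
  define la where "la = arcsin (sin x / a)"
  define lb where "lb = arcsin (sin x / b)"
  define th where "th = \<bar>Arg (Q/P)\<bar>"
  define w where "w = x - pi/6"
  have P0: "P \<noteq> 0" and Q0: "Q \<noteq> 0" using P Q a1 b1 by auto
  have ab0: "0 < a * b" using a1 b1 by simp
  have la: "a * sin la = sin x" "a * cos la = sqrt (a^2 - (sin x)^2)" "pi/6 \<le> la" "la \<le> x"
    using lam_props[OF x1 x2 a1 a2] by (simp_all add: la_def)
  have lb: "b * sin lb = sin x" "b * cos lb = sqrt (b^2 - (sin x)^2)" "pi/6 \<le> lb" "lb \<le> x"
    using lam_props[OF x1 x2 b1 b2] by (simp_all add: lb_def)
  have th_eq: "a * b * cos th = (a^2 + b^2 - (cmod (P - Q))^2) / 2"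
    using cos_abs_Arg[OF P0 Q0] norm_sq_diff[of P Q] P Q by (simp add: th_def)
  have bx: "cmod (cis (-w) * Complex (sqrt (a^2 - (sin x)^2)) (sin x)
            - cis w * Complex (sqrt (b^2 - (sin x)^2)) (- sin x)) \<le> 1"
    unfolding w_def by (rule box[OF x1 x2 t_range[OF x1 x2 a1 a2] t_range[OF x1 x2 b1 b2]])
  have ea: "Complex (sqrt (a^2 - (sin x)^2)) (sin x) = of_real a * cis la"
    using la by (simp add: complex_eq_iff)
  have eb: "Complex (sqrt (b^2 - (sin x)^2)) (- sin x) = of_real b * cis (- lb)"
    using lb by (simp add: complex_eq_iff)
  have "cis (-w) * Complex (sqrt (a^2 - (sin x)^2)) (sin x)
            - cis w * Complex (sqrt (b^2 - (sin x)^2)) (- sin x)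
        = of_real a * cis (la - w) - of_real b * cis (w - lb)"
  proof -
    have c1: "cis (la - w) = cis (-w) * cis la" using cis_mult[of "-w" la] by simp
    have c2: "cis (w - lb) = cis w * cis (-lb)" using cis_mult[of w "-lb"] by simp
    show ?thesis unfolding ea eb c1 c2 by (simp add: algebra_simps)
  qed
  hence "(cmod (of_real a * cis (la - w) - of_real b * cis (w - lb)))^2 \<le> 1"
    using bx by (metis norm_ge_zero power_le_one)
  hence "a^2 + b^2 - 2 * a * b * cos (la + lb - 2 * w) \<le> 1"
  proof -
    have "la - w - (w - lb) = la + lb - 2 * w" by simp
    then show "(cmod (of_real a * cis (la - w) - of_real b * cis (w - lb)))^2 \<le> 1 \<Longrightarrow> ?thesis"
      by (simp only: polar_dist)
  qed
  hence f1: "a^2 + b^2 - 2 * (a * b * cos (la + lb - 2 * w)) \<le> 1" by (simp add: mult.assoc)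
  have f2: "(cmod (P - Q))^2 \<ge> 1" using d by (simp add: one_le_power)
  have "a * b * cos th \<le> a * b * cos (la + lb - 2 * w)"
  proof -
    define X where "X = a * b * cos (la + lb - 2 * w)"
    define Y where "Y = a * b * cos th"
    define D where "D = (cmod (P - Q))^2"
    have "a^2 + b^2 - 2 * X \<le> 1" "1 \<le> D" "Y = (a^2 + b^2 - D) / 2"
      using f1 f2 th_eq by (simp_all add: X_def Y_def D_def)
    hence "Y \<le> X" by (simp add: field_simps)
    then show ?thesis by (simp add: X_def Y_def)
  qed
  hence "cos th \<le> cos (la + lb - 2 * w)" using ab0 by (simp add: mult_le_cancel_left_pos)
  moreover have "0 \<le> th" "th \<le> pi" using abs_Arg_le_pi by (auto simp: th_def)
  moreover have "0 \<le> la + lb - 2 * w" "la + lb - 2 * w \<le> pi"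
    using la lb x2 pi_gt_zero by (simp_all add: w_def)
  ultimately have "la + lb - 2 * w \<le> th" using cos_mono_le_eq[of th "la + lb - 2 * w"] by simp
  then show ?thesis by (simp add: la_def lb_def th_def w_def)
qed

lemma cos_le_taylor4: "cos (y::real) \<le> 1 - y^2/2 + y^4/24"
proof -
  obtain t where t: "cos y = (\<Sum>m<4. cos_coeff m * y ^ m) + (cos (t + 1/2 * real 4 * pi) / fact 4) * y ^ 4"
    using Maclaurin_cos_expansion[of y 4] by blast
  have s: "(\<Sum>m<4. cos_coeff m * y ^ m) = 1 - y^2/2"
    by (simp add: lessThan_nat_numeral cos_coeff_def power2_eq_square)
  have f4: "(fact 4 :: real) = 24" by (simp add: numeral_eq_Suc)
  have "cos (t + 1/2 * real 4 * pi) * y ^ 4 \<le> 1 * y^4"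
    by (intro mult_right_mono) (auto simp: zero_le_even_power)
  then show ?thesis using t s f4 by simp
qed

lemma cos_ge_quad: "1 - y^2/2 \<le> cos (y::real)"
proof -
  have "cos y = 1 - 2 * (sin (y/2))^2" using cos_double_sin[of "y/2"] by simp
  moreover have "(sin (y/2))^2 \<le> (y/2)^2"
    using abs_sin_x_le_abs_x[of "y/2"] by (metis abs_ge_zero power2_abs power_mono)
  ultimately show ?thesis by (simp add: power_divide)
qed

lemma sqrt3_le: "sqrt 3 \<le> 1.7321"
proof -
  have "sqrt 3 \<le> sqrt (1.7321^2)" by (rule real_sqrt_le_mono) (simp add: power2_eq_square)
  then show ?thesis by simp
qed

lemma TI:
  assumes g7: "7 \<le> n"
  shows "4 * sin (pi/6 * (n / (n - 1))) * sin (pi/6 * ((n - 1) / n)) \<le> 1"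
proof -
  define q where "q = pi / (6 * n * (n - 1))"
  define A where "A = pi/6 * (n / (n - 1))"
  define B where "B = pi/6 * ((n - 1) / n)"
  define S where "S = (2 * n - 1) * q"
  define K where "K = (2 * n - 1)^2 * q"
  have n0: "n > 0" "n - 1 > 0" using g7 by auto
  have q0: "q > 0" using n0 by (simp add: q_def)
  have AB1: "A - B = S"
    using n0 by (simp add: A_def B_def S_def q_def field_simps power2_eq_square; simp add: algebra_simps)
  have AB2: "A + B = pi/3 + q"
    using n0 by (simp add: A_def B_def q_def field_simps power2_eq_square; simp add: algebra_simps)
  have KS: "S^2 = K * q" by (simp add: S_def K_def power2_eq_square)
  have Kq: "K = 2 * pi / 3 + q"
    using n0 by (simp add: K_def q_def field_simps power2_eq_square; simp add: algebra_simps)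
  have nn: "42 \<le> n * (n - 1)"
  proof -
    have "7 * 6 \<le> n * (n - 1)" using g7 by (intro mult_mono) auto
    then show ?thesis by simp
  qed
  have qb: "q \<le> 0.0125"
  proof -
    have p: "0 < n * (n - 1)" using n0 by simp
    have "q \<le> pi / (6 * 42)" unfolding q_def using nn p
      by (intro divide_left_mono) (auto simp: mult.assoc algebra_simps)
    also have "\<dots> \<le> 0.0125" using pi_approx by simp
    finally show ?thesis .
  qed
  have Kb1: "2.09 \<le> K" using Kq q0 pi_approx by simp
  have Kb2: "K \<le> 2.2" using Kq qb pi_approx by simp
  have "K * K * q \<le> 2.2 * 2.2 * 0.0125"
    using Kb1 Kb2 qb q0 by (intro mult_mono) auto
  hence lin: "K * K * q / 12 + q / 2 + sqrt 3 \<le> K"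
    using qb sqrt3_le Kb1 by simp
  hence "(K * K * q / 12 + q / 2 + sqrt 3) * q \<le> K * q"
    using q0 by (intro mult_right_mono) auto
  hence key: "S^4 / 12 + q^2 / 2 + sqrt 3 * q \<le> S^2"
  proof -
    have "S^4 = (K * q)^2" using KS by (metis power2_eq_square power_mult[of S 2 2] mult_2_right numeral_Bit0)
    then show "(K * K * q / 12 + q / 2 + sqrt 3) * q \<le> K * q \<Longrightarrow> ?thesis"
      using KS by (simp add: power2_eq_square algebra_simps)
  qed
  have "4 * sin A * sin B = 2 * (cos (A - B) - cos (A + B))"
    by (subst mult.assoc, subst sin_times_sin) simp
  also have "cos (A + B) = cos q / 2 - sqrt 3 / 2 * sin q"
    unfolding AB2 by (simp add: cos_add cos_60 sin_60)
  also have "A - B = S" by (rule AB1)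
  finally have eq: "4 * sin A * sin B = 2 * (cos S - (cos q / 2 - sqrt 3 / 2 * sin q))" .
  have b1: "2 * cos S \<le> 2 - S^2 + S^4/12" using cos_le_taylor4[of S] by linarith
  have b2: "1 - q^2/2 \<le> cos q" by (rule cos_ge_quad)
  have b3: "sqrt 3 * sin q \<le> sqrt 3 * q" using q0 by (intro mult_left_mono sin_x_le_x) auto
  have e1: "4 * sin A * sin B = 2 * cos S - cos q + sqrt 3 * sin q"
    using eq by (simp add: algebra_simps)
  have "4 * sin A * sin B \<le> 1 - S^2 + S^4/12 + q^2/2 + sqrt 3 * q"
    using b1 b2 b3 e1 by linarith
  hence "4 * sin A * sin B \<le> 1" using key by linarith
  then show ?thesis by (simp add: A_def B_def)
qed

lemma S3_alg_aux:
  fixes a b R :: real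
  assumes R1: "1 \<le> R" and R2: "R^2 \<le> 2" and a1: "1 \<le> a" and ab: "a \<le> b" and b2: "b \<le> R"
  shows "(a - b)^2 + a * b / R^2 \<le> 1"
proof -
  define d where "d = b - a"
  have d0: "0 \<le> d" using ab by (simp add: d_def)
  have R0: "0 < R" using R1 by simp
  have "a * b \<le> (R - d) * R" using a1 ab b2 d0 unfolding d_def by (intro mult_mono) auto
  hence "a * b / R^2 \<le> (R - d) * R / R^2" using R0 by (intro divide_right_mono) auto
  also have "\<dots> = 1 - d / R" using R0 by (simp add: power2_eq_square field_simps)
  finally have h1: "a * b / R^2 \<le> 1 - d / R" .
  have "(R - 1) * R \<le> 1" using R2 R1 by (simp add: power2_eq_square algebra_simps)
  hence "R - 1 \<le> 1 / R" using R0 by (simp add: field_simps)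
  hence "d \<le> 1 / R" using b2 a1 by (simp add: d_def)
  hence "d * d \<le> d * (1 / R)" using d0 by (intro mult_left_mono) auto
  hence "(a - b)^2 \<le> d / R" by (simp add: d_def power2_eq_square algebra_simps)
  then show ?thesis using h1 by linarith
qed

lemma S3_alg:
  fixes a b R :: real
  assumes "1 \<le> R" "R^2 \<le> 2" "1 \<le> a" "a \<le> R" "1 \<le> b" "b \<le> R"
  shows "(a - b)^2 + a * b / R^2 \<le> 1"
proof (cases "a \<le> b")
  case True
  then show ?thesis using S3_alg_aux[of R a b] assms by simp
next
  case False
  then have "(b - a)^2 + b * a / R^2 \<le> 1" using S3_alg_aux[of R b a] assms by simp
  then show ?thesis by (simp add: power2_commute mult.commute)
qed

lemma S3:
  assumes P: "cmod P = a" and Q: "cmod Q = b" and R1: "1 \<le> R" and R2: "R^2 \<le> 2"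
    and a1: "1 \<le> a" and a2: "a \<le> R" and b1: "1 \<le> b" and b2: "b \<le> R"
    and d: "1 \<le> cmod (P - Q)"
  shows "cos \<bar>Arg (Q/P)\<bar> \<le> 1 - 1 / (2 * R^2)"
proof -
  have P0: "P \<noteq> 0" and Q0: "Q \<noteq> 0" using P Q a1 b1 by auto
  have ab0: "0 < a * b" using a1 b1 by simp
  have th_eq: "a * b * cos \<bar>Arg (Q/P)\<bar> = (a^2 + b^2 - (cmod (P - Q))^2) / 2"
    using cos_abs_Arg[OF P0 Q0] norm_sq_diff[of P Q] P Q by simp
  have "(cmod (P - Q))^2 \<ge> 1" using d by (simp add: one_le_power)
  hence h1: "a * b * cos \<bar>Arg (Q/P)\<bar> * 2 \<le> a^2 + b^2 - 1" using th_eq by simp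
  have "(a - b)^2 + a * b / R^2 \<le> 1" by (rule S3_alg) (use assms in auto)
  hence "a^2 + b^2 - 1 \<le> 2 * (a * b) - a * b / R^2"
    by (simp add: power2_diff algebra_simps)
  also have "\<dots> = a * b * (1 - 1 / (2 * R^2)) * 2" by (simp add: algebra_simps)
  finally have "a * b * cos \<bar>Arg (Q/P)\<bar> \<le> a * b * (1 - 1 / (2 * R^2))" using h1 by simp
  then show ?thesis using ab0 by (simp add: mult_le_cancel_left_pos)
qed

lemma periodic_add: "(\<And>i. p (i + g) = p i) \<Longrightarrow> p (i + k * g) = p (i::nat)"
proof (induction k)
  case (Suc k)
  have "i + Suc k * g = (i + k * g) + g" by simp
  then show ?case using Suc by metis
qed simp

lemma periodic_mod: "(\<And>i. p (i + g) = p i) \<Longrightarrow> p i = p (i mod (g::nat))"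
  using periodic_add[of p g "i mod g" "i div g"] by (simp add: mod_div_mult_eq)

lemma periodic_shift_sum:
  fixes p :: "nat \<Rightarrow> 'a::comm_monoid_add"
  assumes "\<And>i. p (i + g) = p i"
  shows "(\<Sum>i<g. p (Suc i)) = (\<Sum>i<g. p i)"
proof (cases g)
  case 0
  then show ?thesis by simp
next
  case (Suc n)
  have "(\<Sum>i<Suc n. p (Suc i)) = (\<Sum>i<n. p (Suc i)) + p (Suc n)" by simp
  also have "p (Suc n) = p 0" using assms[of 0] Suc by simp
  also have "(\<Sum>i<n. p (Suc i)) + p 0 = (\<Sum>i<Suc n. p i)"
    by (subst sum.lessThan_Suc_shift) (simp add: add.commute)
  finally show ?thesis using Suc by simp
qed

lemma exists_change:
  assumes g0: "0 < g" and per: "\<And>i. lab (i + g) = lab i" and li: "lab i" and lj: "\<not> lab j"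
  shows "\<exists>k<g. lab k \<and> \<not> lab (Suc k)"
proof (rule ccontr)
  assume "\<not> ?thesis"
  hence H: "\<And>k. k < g \<Longrightarrow> lab k \<Longrightarrow> lab (Suc k)" by blast
  have step: "lab k \<Longrightarrow> lab (Suc k)" for k
  proof -
    assume "lab k"
    hence "lab (k mod g)" using periodic_mod[of lab g k] per by simp
    hence "lab (Suc (k mod g))" using H g0 by simp
    hence "lab (Suc (k mod g) mod g)" using periodic_mod[of lab g "Suc (k mod g)"] per by simp
    hence "lab (Suc k mod g)" by (simp add: mod_Suc_eq)
    then show "lab (Suc k)" using periodic_mod[of lab g "Suc k"] per by simp
  qed
  have up: "lab (i + m)" for m
    by (induction m) (use li step in auto)
  have "lab (j + i * g) = lab j" using periodic_add[of lab g j i] per by simp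
  moreover have "j + i * g = i + (j + i * g - i)"
  proof -
    have "i \<le> j + i * g" using g0 by (cases g) auto
    then show ?thesis by simp
  qed
  ultimately show False using up[of "j + i * g - i"] lj by metis
qed

lemma vertex_sum:
  fixes lab :: "nat \<Rightarrow> bool" and Fv Bv w :: "nat \<Rightarrow> real"
  assumes g0: "0 < g" and pl: "\<And>i. lab (i + g) = lab i"
    and pF: "\<And>i. Fv (i + g) = Fv i" and pB: "\<And>i. Bv (i + g) = Bv i"
    and hF: "\<And>i. Fv i \<le> h" and hB: "\<And>i. Bv i \<le> h" and hFB: "\<And>i. Fv i + Bv i \<le> h"
    and w: "\<And>i. w i \<le> (if lab i then Fv i + Fv (Suc i) else Bv i + Bv (Suc i))"
  shows "(\<Sum>i<g. w i) \<le> 2 * real g * h"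
    and "(\<exists>i j. lab i \<noteq> lab j) \<Longrightarrow> (\<Sum>i<g. w i) \<le> (2 * real g - 2) * h"
proof -
  define G where "G i c = (if c then Fv i else Bv i)" for i c
  define V where "V i = G (Suc i) (lab i) + G (Suc i) (lab (Suc i))" for i
  have "(\<Sum>i<g. w i) \<le> (\<Sum>i<g. G i (lab i) + G (Suc i) (lab i))"
  proof (intro sum_mono)
    fix i show "w i \<le> G i (lab i) + G (Suc i) (lab i)"
      using w[of i] by (cases "lab i") (simp_all add: G_def)
  qed
  also have "\<dots> = (\<Sum>i<g. G i (lab i)) + (\<Sum>i<g. G (Suc i) (lab i))"
    by (simp add: sum.distrib)
  also have "(\<Sum>i<g. G i (lab i)) = (\<Sum>i<g. G (Suc i) (lab (Suc i)))"
    by (rule periodic_shift_sum[symmetric, of "\<lambda>i. G i (lab i)"]) (simp add: G_def pl pF pB)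
  also have "(\<Sum>i<g. G (Suc i) (lab (Suc i))) + (\<Sum>i<g. G (Suc i) (lab i)) = (\<Sum>i<g. V i)"
    by (simp add: V_def sum.distrib add.commute)
  finally have sV: "(\<Sum>i<g. w i) \<le> (\<Sum>i<g. V i)" .
  have V2: "V i \<le> 2 * h" for i using hF[of "Suc i"] hB[of "Suc i"] by (auto simp: V_def G_def)
  have V1: "lab i \<noteq> lab (Suc i) \<Longrightarrow> V i \<le> h" for i
    using hFB[of "Suc i"] by (auto simp: V_def G_def add.commute)
  have "(\<Sum>i<g. V i) \<le> (\<Sum>i<g. 2 * h)" by (intro sum_mono V2)
  then show "(\<Sum>i<g. w i) \<le> 2 * real g * h" using sV by simp
  assume "\<exists>i j. lab i \<noteq> lab j"
  then obtain i j where "lab i" "\<not> lab j" by metis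
  obtain k1 where k1: "k1 < g" "lab k1" "\<not> lab (Suc k1)"
    using exists_change[OF g0 pl \<open>lab i\<close> \<open>\<not> lab j\<close>] by blast
  obtain k2 where k2: "k2 < g" "\<not> lab k2" "lab (Suc k2)"
    using exists_change[of g "\<lambda>i. \<not> lab i" j i] g0 pl \<open>lab i\<close> \<open>\<not> lab j\<close> by auto
  have kk: "k1 \<noteq> k2" using k1 k2 by auto
  define c where "c i = (if i = k1 then h else 0) + (if i = k2 then h else 0)" for i
  have "V i \<le> 2 * h - c i" for i
    using V1[of i] V2[of i] k1 k2 kk by (auto simp: c_def)
  hence "(\<Sum>i<g. V i) \<le> (\<Sum>i<g. 2 * h - c i)" by (intro sum_mono)
  also have "\<dots> = 2 * real g * h - (\<Sum>i<g. c i)" by (simp add: sum_subtractf)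
  also have "(\<Sum>i<g. c i) = 2 * h" using k1 k2 by (simp add: c_def sum.distrib)
  finally show "(\<Sum>i<g. w i) \<le> (2 * real g - 2) * h" using sV by (simp add: algebra_simps)
qed

lemma cis_sum: "cis (\<Sum>i<(k::nat). t i) = (\<Prod>i<k. cis (t i))"
  by (induction k) (simp_all add: cis_mult[symmetric])

lemma sgn_prod_lessThan: "(\<Prod>i<(k::nat). sgn (u i :: complex)) = sgn (\<Prod>i<k. u i)"
  by (induction k) (simp_all add: sgn_mult)

lemma prod_telescope_div:
  assumes "\<And>i. f i \<noteq> (0::complex)"
  shows "(\<Prod>i<k. f (Suc i) / f i) = f k / f 0"
proof (induction k)
  case (Suc k)
  then show ?case using assms[of k] by (simp add: field_simps)
qed (use assms in simp)

lemma winding: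
  fixes f :: "nat \<Rightarrow> complex"
  assumes nz: "\<And>i. f i \<noteq> 0" and per: "f g = f 0"
  shows "\<exists>n::int. (\<Sum>i<g. Arg (f (Suc i) / f i)) = 2 * pi * n"
proof -
  have "cis (\<Sum>i<g. Arg (f (Suc i) / f i)) = (\<Prod>i<g. cis (Arg (f (Suc i) / f i)))"
    by (rule cis_sum)
  also have "\<dots> = (\<Prod>i<g. sgn (f (Suc i) / f i))"
    using nz by (intro prod.cong refl cis_Arg) simp
  also have "\<dots> = sgn (\<Prod>i<g. f (Suc i) / f i)" by (rule sgn_prod_lessThan)
  also have "\<dots> = 1" using prod_telescope_div[of f g, OF nz] per nz[of 0] by simp
  finally have "cos (\<Sum>i<g. Arg (f (Suc i) / f i)) = 1"
    by (metis Re_complex_of_real cis.sel(1) one_complex.sel(1))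
  then obtain n :: int where "(\<Sum>i<g. Arg (f (Suc i) / f i)) = real_of_int n * 2 * pi"
    using cos_one_2pi_int by blast
  then show ?thesis by (metis mult.commute mult.left_commute)
qed

lemma parity_sum: "odd (\<Sum>i<(g::nat). (if P i then 1 else -1 :: int)) \<longleftrightarrow> odd g"
  by (induction g) auto

lemma odd_int_abs_ge1: "odd (z::int) \<Longrightarrow> 1 \<le> \<bar>z\<bar>"
  by (cases "z = 0") auto

lemma geo_core:
  fixes f :: "nat \<Rightarrow> complex" and g :: nat and x :: real
  assumes godd: "odd g" and g3: "3 \<le> g" and per: "\<And>i. f (i + g) = f i"
    and fb1: "\<And>i. 1 \<le> cmod (f i)" and fb2: "\<And>i. cmod (f i) \<le> 2 * sin x"
    and db1: "\<And>i. 1 \<le> cmod (f (Suc i) - f i)" and db2: "\<And>i. cmod (f (Suc i) - f i) \<le> 2 * sin x"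
    and x1: "pi/6 \<le> x" and x2: "x \<le> pi/4"
  shows "pi \<le> 2 * real g * (3 * x - pi/2)"
    and "(\<exists>i j. (0 < Arg (f (Suc i) / f i)) \<noteq> (0 < Arg (f (Suc j) / f j)))
          \<Longrightarrow> pi \<le> (2 * real g - 2) * (3 * x - pi/2)"
    and "\<not> (\<exists>i j. (0 < Arg (f (Suc i) / f i)) \<noteq> (0 < Arg (f (Suc j) / f j)))
          \<Longrightarrow> \<exists>k::int. (\<Sum>i<g. \<bar>Arg (f (Suc i) / f i)\<bar>) = 2 * pi * k \<and>
               \<bar>3 * (\<Sum>i<g. \<bar>Arg (f (Suc i) / f i)\<bar>) - real g * pi\<bar> \<le> 2 * real g * (3 * x - pi/2)"
proof -
  define phi where "phi i = Arg (f (Suc i) / f i)" for i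
  define lam where "lam i = arcsin (sin x / cmod (f i))" for i
  define w where "w = x - pi/6"
  define H where "H = 3 * x - pi/2"
  define lab where "lab i = (0 < phi i)" for i
  define sg where "sg i = (if lab i then 1 else -1 :: int)" for i
  define psi where "psi i = 3 * phi i - pi * of_int (sg i)" for i
  define Fv where "Fv i = 3 * lam i - pi/2" for i
  define Bv where "Bv i = pi/2 - 3 * lam i + 3 * w" for i
  have g0: "0 < g" using g3 by simp
  have b1: "\<bar>phi i\<bar> \<le> lam i + lam (Suc i)" for i
    using S1[OF x1 x2 refl refl fb1[of i] fb2[of i] fb1[of "Suc i"] fb2[of "Suc i"]] db2[of i]
    by (simp add: phi_def lam_def norm_minus_commute)
  have b2: "lam i + lam (Suc i) - 2 * w \<le> \<bar>phi i\<bar>" for i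
    using S2[OF x1 x2 refl refl fb1[of i] fb2[of i] fb1[of "Suc i"] fb2[of "Suc i"]] db1[of i]
    by (simp add: phi_def lam_def norm_minus_commute w_def)
  have lr: "pi/6 \<le> lam i" "lam i \<le> x" for i
    using lam_props(3,4)[OF x1 x2 fb1[of i] fb2[of i]] by (simp_all add: lam_def)
  have pos: "0 < \<bar>phi i\<bar>" for i
  proof -
    have "0 < lam i + lam (Suc i) - 2 * w"
      unfolding w_def using lr[of i] lr[of "Suc i"] x2 pi_gt_zero by (simp add: algebra_simps; linarith)
    then show ?thesis using b2[of i] by linarith
  qed
  have nz: "phi i \<noteq> 0" for i using pos[of i] by auto
  have up: "psi i \<le> (if lab i then Fv i + Fv (Suc i) else Bv i + Bv (Suc i))" for i
  proof (cases "lab i")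
    case True
    hence "\<bar>phi i\<bar> = phi i" by (simp add: lab_def)
    then show ?thesis using True b1[of i] by (simp add: psi_def sg_def Fv_def)
  next
    case False
    hence "\<bar>phi i\<bar> = - phi i" using nz[of i] by (simp add: lab_def)
    then show ?thesis using False b2[of i] by (simp add: psi_def sg_def Bv_def)
  qed
  have lo: "- psi i \<le> (if \<not> lab i then Fv i + Fv (Suc i) else Bv i + Bv (Suc i))" for i
  proof (cases "lab i")
    case True
    hence "\<bar>phi i\<bar> = phi i" by (simp add: lab_def)
    then show ?thesis using True b2[of i] by (simp add: psi_def sg_def Bv_def)
  next
    case False
    hence "\<bar>phi i\<bar> = - phi i" using nz[of i] by (simp add: lab_def)
    then show ?thesis using False b1[of i] by (simp add: psi_def sg_def Fv_def)
  qed
  have pf: "f (Suc (i + g)) = f (Suc i)" for i using per[of "Suc i"] by simp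
  have plab: "lab (i + g) = lab i" for i by (simp add: lab_def phi_def per pf)
  have plam: "lam (i + g) = lam i" for i by (simp add: lam_def per)
  have pF: "Fv (i + g) = Fv i" for i by (simp add: Fv_def plam)
  have pB: "Bv (i + g) = Bv i" for i by (simp add: Bv_def plam)
  have hF: "Fv i \<le> H" for i using lr[of i] by (simp add: Fv_def H_def)
  have hB: "Bv i \<le> H" for i using lr[of i] by (simp add: Bv_def H_def w_def)
  have hFB: "Fv i + Bv i \<le> H" for i by (simp add: Fv_def Bv_def H_def w_def)
  have U1: "(\<Sum>i<g. psi i) \<le> 2 * real g * H"
    by (rule vertex_sum(1)[OF g0 plab pF pB hF hB hFB up])
  have L1: "(\<Sum>i<g. - psi i) \<le> 2 * real g * H"
    by (rule vertex_sum(1)[of g "\<lambda>i. \<not> lab i", OF g0 _ pF pB hF hB hFB lo]) (simp add: plab)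
  obtain n :: int where wn: "(\<Sum>i<g. phi i) = 2 * pi * n"
    using winding[of f g] fb1 per[of 0] unfolding phi_def
    by (metis norm_zero not_one_le_zero add_0)
  define m where "m = (\<Sum>i<g. sg i)"
  have modd: "odd m" using parity_sum[of lab g] godd by (simp add: m_def sg_def)
  have spsi: "(\<Sum>i<g. psi i) = pi * of_int (6 * n - m)"
  proof -
    have "(\<Sum>i<g. psi i) = 3 * (\<Sum>i<g. phi i) - pi * (\<Sum>i<g. of_int (sg i))"
      by (simp add: psi_def sum_subtractf sum_distrib_left)
    also have "(\<Sum>i<g. of_int (sg i) :: real) = of_int m" by (simp add: m_def)
    finally show ?thesis using wn by (simp add: algebra_simps)
  qed
  have big: "pi \<le> \<bar>\<Sum>i<g. psi i\<bar>"
  proof -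
    have "odd (6 * n - m)" using modd by simp
    hence "1 \<le> \<bar>6 * n - m\<bar>" by (rule odd_int_abs_ge1)
    hence "(1::real) \<le> \<bar>of_int (6 * n - m)\<bar>" by linarith
    hence "pi * 1 \<le> pi * \<bar>of_int (6 * n - m)\<bar>" by (intro mult_left_mono) auto
    then show ?thesis using spsi by (simp add: abs_mult)
  qed
  have negs: "(\<Sum>i<g. - psi i) = - (\<Sum>i<g. psi i)" by (simp add: sum_negf)
  have absb: "\<bar>\<Sum>i<g. psi i\<bar> \<le> 2 * real g * H" using U1 L1 negs by (simp add: abs_le_iff)
  show "pi \<le> 2 * real g * (3 * x - pi/2)"
    using order_trans[OF big absb] by (simp add: H_def)
  show "(\<exists>i j. (0 < Arg (f (Suc i) / f i)) \<noteq> (0 < Arg (f (Suc j) / f j)))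
          \<Longrightarrow> pi \<le> (2 * real g - 2) * (3 * x - pi/2)"
  proof -
    assume "\<exists>i j. (0 < Arg (f (Suc i) / f i)) \<noteq> (0 < Arg (f (Suc j) / f j))"
    hence mx: "\<exists>i j. lab i \<noteq> lab j" by (simp add: lab_def phi_def)
    have mx': "\<exists>i j. (\<not> lab i) \<noteq> (\<not> lab j)" using mx by blast
    have U2: "(\<Sum>i<g. psi i) \<le> (2 * real g - 2) * H"
      by (rule vertex_sum(2)[OF g0 plab pF pB hF hB hFB up mx])
    have L2: "(\<Sum>i<g. - psi i) \<le> (2 * real g - 2) * H"
      by (rule vertex_sum(2)[of g "\<lambda>i. \<not> lab i", OF g0 _ pF pB hF hB hFB lo mx']) (simp add: plab)
    have "\<bar>\<Sum>i<g. psi i\<bar> \<le> (2 * real g - 2) * H" using U2 L2 negs by (simp add: abs_le_iff)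
    then show ?thesis using order_trans[OF big] by (simp add: H_def)
  qed
  show "\<not> (\<exists>i j. (0 < Arg (f (Suc i) / f i)) \<noteq> (0 < Arg (f (Suc j) / f j)))
          \<Longrightarrow> \<exists>k::int. (\<Sum>i<g. \<bar>Arg (f (Suc i) / f i)\<bar>) = 2 * pi * k \<and>
               \<bar>3 * (\<Sum>i<g. \<bar>Arg (f (Suc i) / f i)\<bar>) - real g * pi\<bar> \<le> 2 * real g * (3 * x - pi/2)"
  proof -
    assume "\<not> (\<exists>i j. (0 < Arg (f (Suc i) / f i)) \<noteq> (0 < Arg (f (Suc j) / f j)))"
    hence cst: "lab i = lab 0" for i by (simp add: lab_def phi_def)
    have bnd: "\<bar>\<Sum>i<g. psi i\<bar> \<le> 2 * real g * H" using U1 L1 negs by (simp add: abs_le_iff)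
    show ?thesis
    proof (cases "lab 0")
      case True
      have th: "\<bar>phi i\<bar> = phi i" for i using cst[of i] True by (simp add: lab_def)
      have ps: "psi i = 3 * \<bar>phi i\<bar> - pi" for i using cst[of i] True th[of i] by (simp add: psi_def sg_def)
      have "(\<Sum>i<g. psi i) = 3 * (\<Sum>i<g. \<bar>phi i\<bar>) - real g * pi"
        by (simp add: ps sum_subtractf sum_distrib_left)
      moreover have "(\<Sum>i<g. \<bar>phi i\<bar>) = 2 * pi * n" using wn th by simp
      ultimately show ?thesis using bnd by (intro exI[of _ n]) (simp add: phi_def H_def)
    next
      case False
      have th: "\<bar>phi i\<bar> = - phi i" for i using cst[of i] False nz[of i] by (simp add: lab_def)
      have ps: "psi i = - (3 * \<bar>phi i\<bar> - pi)" for i using cst[of i] False th[of i] by (simp add: psi_def sg_def)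
      have "(\<Sum>i<g. psi i) = - (3 * (\<Sum>i<g. \<bar>phi i\<bar>) - real g * pi)"
        by (simp add: ps sum_subtractf sum_distrib_left sum_negf)
      moreover have "(\<Sum>i<g. \<bar>phi i\<bar>) = 2 * pi * (- n)" using wn th by (simp add: sum_negf)
      ultimately show ?thesis using bnd by (intro exI[of _ "- n"]) (simp add: phi_def H_def)
    qed
  qed
qed

lemma get_x:
  assumes x01: "pi/6 < x0" and x02: "x0 \<le> pi/4" and R1: "1 \<le> R" and R2: "R < 2 * sin x0"
  shows "\<exists>x. pi/6 \<le> x \<and> x < x0 \<and> R = 2 * sin x"
proof -
  define x where "x = arcsin (R/2)"
  have s1: "sin x0 \<le> 1" by simp
  have "R \<le> 2" using R2 s1 by linarith
  hence r1: "\<bar>R/2\<bar> \<le> 1" using R1 by (auto simp: abs_le_iff)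
  have sx: "sin x = R/2" using r1 by (simp add: x_def abs_le_iff)
  have "pi/6 = arcsin (1/2)" by (subst sin_30[symmetric], rule arcsin_sin[symmetric]) (auto simp: pi_gt_zero)
  also have "\<dots> \<le> x" unfolding x_def using R1 r1 by (intro arcsin_le_arcsin) (auto simp: abs_le_iff)
  finally have "pi/6 \<le> x" .
  moreover have "x < x0"
  proof -
    have "x0 = arcsin (sin x0)" using x01 x02 pi_gt_zero by (intro arcsin_sin[symmetric]) linarith+
    moreover have "arcsin (R/2) < arcsin (sin x0)"
    proof -
      have "\<bar>sin x0\<bar> \<le> 1" by (rule abs_sin_le_one)
      hence "arcsin (R/2) < arcsin (sin x0) \<longleftrightarrow> R/2 < sin x0" using arcsin_less_mono r1 by blast
      then show ?thesis using R2 by simp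
    qed
    ultimately show ?thesis by (simp add: x_def)
  qed
  ultimately show ?thesis using sx by auto
qed

lemma geo_main:
  fixes f :: "nat \<Rightarrow> complex" and g :: nat and R :: real
  assumes godd: "odd g" and g3: "3 \<le> g" and per: "\<And>i. f (i + g) = f i"
    and fb1: "\<And>i. 1 \<le> cmod (f i)" and fb2: "\<And>i. cmod (f i) \<le> R"
    and db1: "\<And>i. 1 \<le> cmod (f (Suc i) - f i)" and db2: "\<And>i. cmod (f (Suc i) - f i) \<le> R"
  shows "g mod 6 = 1 \<or> g mod 6 = 3 \<Longrightarrow> 2 * sin (pi/6 * (real g / (real g - 1))) \<le> R"
    and "g mod 6 = 5 \<Longrightarrow> 2 * sin (pi/6 * ((real g + 1) / real g)) \<le> R"
proof -
  have R1: "1 \<le> R" using fb1[of 0] fb2[of 0] by linarith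
  have gr: "3 \<le> real g" using g3 by simp
  show "2 * sin (pi/6 * ((real g + 1) / real g)) \<le> R" if g5: "g mod 6 = 5"
  proof (rule ccontr)
    assume "\<not> ?thesis"
    hence lt: "R < 2 * sin (pi/6 * ((real g + 1) / real g))" by simp
    define x0 where "x0 = pi/6 * ((real g + 1) / real g)"
    have g5': "5 \<le> real g" using g3 g5 by simp
    have "pi/6 * 1 < x0" unfolding x0_def using gr by (intro mult_strict_left_mono) auto
    hence x01: "pi/6 < x0" by simp
    have "x0 \<le> pi/6 * (3/2)" unfolding x0_def using g5' by (intro mult_left_mono) (auto simp: field_simps)
    hence x02: "x0 \<le> pi/4" by simp
    obtain x where x: "pi/6 \<le> x" "x < x0" "R = 2 * sin x"
      using get_x[OF x01 x02 R1] lt by (auto simp: x0_def)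
    have "pi \<le> 2 * real g * (3 * x - pi/2)"
      by (rule geo_core(1)[OF godd g3 per fb1 _ db1 _ x(1)]) (use fb2 db2 x x02 in auto)
    moreover have "real g * x < real g * x0" using x gr by (intro mult_strict_left_mono) auto
    moreover have "real g * x0 = pi * (real g + 1) / 6" using gr by (simp add: x0_def field_simps)
    ultimately show False by (simp add: algebra_simps)
  qed
  show "2 * sin (pi/6 * (real g / (real g - 1))) \<le> R" if g13: "g mod 6 = 1 \<or> g mod 6 = 3"
  proof (rule ccontr)
    assume "\<not> ?thesis"
    hence lt: "R < 2 * sin (pi/6 * (real g / (real g - 1)))" by simp
    define x0 where "x0 = pi/6 * (real g / (real g - 1))"
    have "pi/6 * 1 < x0" unfolding x0_def using gr by (intro mult_strict_left_mono) auto
    hence x01: "pi/6 < x0" by simp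
    have "x0 \<le> pi/6 * (3/2)" unfolding x0_def using gr by (intro mult_left_mono) (auto simp: field_simps)
    hence x02: "x0 \<le> pi/4" by simp
    obtain x where x: "pi/6 \<le> x" "x < x0" "R = 2 * sin x"
      using get_x[OF x01 x02 R1] lt by (auto simp: x0_def)
    have x2: "x \<le> pi/4" using x x02 by simp
    have fb2': "\<And>i. cmod (f i) \<le> 2 * sin x" and db2': "\<And>i. cmod (f (Suc i) - f i) \<le> 2 * sin x"
      using fb2 db2 x by auto
    note core = geo_core[OF godd g3 per fb1 fb2' db1 db2' x(1) x2]
    define H where "H = 3 * x - pi/2"
    have H0: "0 \<le> H" using x by (simp add: H_def)
    have "(real g - 1) * x < (real g - 1) * x0" using x gr by (intro mult_strict_left_mono) auto
    moreover have "(real g - 1) * x0 = pi * real g / 6" using gr by (simp add: x0_def field_simps)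
    ultimately have Hlt: "(2 * real g - 2) * H < pi" by (simp add: H_def algebra_simps)
    show False
    proof (cases "\<exists>i j. (0 < Arg (f (Suc i) / f i)) \<noteq> (0 < Arg (f (Suc j) / f j))")
      case True
      then show False using core(2) Hlt by (simp add: H_def)
    next
      case False
      then obtain k :: int where k: "(\<Sum>i<g. \<bar>Arg (f (Suc i) / f i)\<bar>) = 2 * pi * k"
        and kb: "\<bar>3 * (\<Sum>i<g. \<bar>Arg (f (Suc i) / f i)\<bar>) - real g * pi\<bar> \<le> 2 * real g * (3 * x - pi/2)"
        using core(3) by blast
      have "4 * H \<le> (2 * real g - 2) * H" using gr H0 by (intro mult_right_mono) auto
      hence "H < pi / 4" using Hlt by simp
      hence "2 * real g * H < 3 * pi / 2" using Hlt by (simp add: algebra_simps)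
      hence "\<bar>3 * (2 * pi * k) - real g * pi\<bar> < 3 * pi / 2" using kb k by (simp add: H_def)
      also have "3 * (2 * pi * k) - real g * pi = pi * of_int (6 * k - int g)" by (simp add: algebra_simps)
      finally have "pi * \<bar>of_int (6 * k - int g)\<bar> < pi * (3/2)" by (simp add: abs_mult)
      hence "\<bar>of_int (6 * k - int g)\<bar> < (3/2::real)" using pi_gt_zero by (simp only: mult_less_cancel_left_pos)
      hence kk: "\<bar>6 * k - int g\<bar> \<le> 1" by linarith
      show False
      proof (cases "g mod 6 = 3")
        case True
        then show False using kk by presburger
      next
        case False
        hence g1: "g mod 6 = 1" using g13 by simp
        hence k6: "6 * k = int g - 1" using kk by presburger
        have g7: "7 \<le> g" using g1 g3 by presburger
        define c where "c = pi * (real g - 1) / (3 * real g)"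
        have sumeq: "(\<Sum>i<g. \<bar>Arg (f (Suc i) / f i)\<bar>) = real g * c"
        proof -
          have hk: "6 * real_of_int k = real g - 1" using arg_cong[OF k6, of real_of_int] by simp
          have "real g * c = pi * (real g - 1) / 3" using gr by (simp add: c_def field_simps)
          also have "\<dots> = 2 * pi * real_of_int k" by (subst hk[symmetric]) simp
          finally show ?thesis using k by simp
        qed
        obtain i where i: "i < g" "\<bar>Arg (f (Suc i) / f i)\<bar> \<le> c"
        proof (rule ccontr)
          assume "\<not> thesis"
          hence "\<forall>i\<in>{..<g}. c < \<bar>Arg (f (Suc i) / f i)\<bar>" using that by force
          hence "(\<Sum>i<g. c) < (\<Sum>i<g. \<bar>Arg (f (Suc i) / f i)\<bar>)"
            using g3 by (intro sum_strict_mono) (auto simp: lessThan_empty_iff)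
          then show False using sumeq by simp
        qed
        define a0 where "a0 = pi/6 * ((real g - 1) / real g)"
        have c2: "c = 2 * a0" by (simp add: c_def a0_def)
        have a0p: "0 < a0" "a0 \<le> pi/6" using gr by (auto simp: a0_def field_simps)
        have sa0: "0 < sin a0" using a0p pi_gt_zero by (intro sin_gt_zero) linarith+
        have Rs: "R^2 \<le> 2"
        proof -
          have "sin x \<le> sin (pi/4)" using x x2 pi_gt_zero by (intro sin_monotone_2pi_le) auto
          hence "R \<le> sqrt 2" using x(3) by (simp add: sin_45)
          then show ?thesis using R1 by (metis power_mono real_sqrt_pow2 zero_le_one order_trans zero_le_numeral)
        qed
        have cS3: "cos \<bar>Arg (f (Suc i) / f i)\<bar> \<le> 1 - 1 / (2 * R^2)"
          by (rule S3[OF refl refl R1 Rs fb1 fb2 fb1 fb2 ]) (use db1[of i] in \<open>simp add: norm_minus_commute\<close>)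
        have "cos c \<le> cos \<bar>Arg (f (Suc i) / f i)\<bar>"
          using i a0p by (intro cos_monotone_0_pi_le) (auto simp: c2)
        hence "1 - 2 * (sin a0)^2 \<le> 1 - 1 / (2 * R^2)"
          using cS3 by (simp add: c2 cos_double_sin)
        hence "1 / (2 * R^2) \<le> 2 * (sin a0)^2" by simp
        hence ge1: "1 \<le> (2 * R * sin a0)^2" using R1 by (simp add: field_simps power_mult_distrib)
        have "2 * R * sin a0 < 2 * (2 * sin x0) * sin a0" using lt sa0 by (simp add: x0_def)
        also have "\<dots> = 4 * sin x0 * sin a0" by simp
        also have "\<dots> \<le> 1" using TI[of "real g"] g7 by (simp add: x0_def a0_def)
        finally have "2 * R * sin a0 < 1" .
        moreover have "0 \<le> 2 * R * sin a0" using R1 sa0 by simp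
        ultimately have "(2 * R * sin a0)^2 < 1" by (simp add: power_less_one_iff abs_less_iff)
        then show False using ge1 by simp
      qed
    qed
  qed
qed

definition walk :: "'e set \<Rightarrow> ('e \<Rightarrow> 'v \<times> 'v) \<Rightarrow> (nat \<Rightarrow> 'v) \<Rightarrow> (nat \<Rightarrow> 'e) \<Rightarrow> nat \<Rightarrow> bool" where
  "walk E ends vs es n \<longleftrightarrow>
     (\<forall>i<n. es i \<in> E \<and> (ends (es i) = (vs i, vs (Suc i)) \<or> ends (es i) = (vs (Suc i), vs i)))"

definition wlk :: "'e set \<Rightarrow> ('e \<Rightarrow> 'v \<times> 'v) \<Rightarrow> 'v \<Rightarrow> 'v \<Rightarrow> nat \<Rightarrow> bool" where
  "wlk E ends x y n \<longleftrightarrow> (\<exists>vs es. walk E ends vs es n \<and> vs 0 = x \<and> vs n = y)"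

lemma wlk_refl: "wlk E ends x x 0"
  unfolding wlk_def walk_def by (rule exI[of _ "\<lambda>_. x"]) auto

lemma wlk_edge:
  assumes "e \<in> E" "ends e = (x, y) \<or> ends e = (y, x)"
  shows "wlk E ends x y 1"
  unfolding wlk_def walk_def
  by (rule exI[of _ "\<lambda>i. if i = 0 then x else y"], rule exI[of _ "\<lambda>_. e"]) (use assms in auto)

lemma wlk_append:
  assumes "wlk E ends x y n" "wlk E ends y z m"
  shows "wlk E ends x z (n + m)"
proof -
  obtain vs1 es1 where w1: "walk E ends vs1 es1 n" "vs1 0 = x" "vs1 n = y"
    using assms(1) unfolding wlk_def by blast
  obtain vs2 es2 where w2: "walk E ends vs2 es2 m" "vs2 0 = y" "vs2 m = z"
    using assms(2) unfolding wlk_def by blast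
  define vs where "vs t = (if t \<le> n then vs1 t else vs2 (t - n))" for t
  define es where "es t = (if t < n then es1 t else es2 (t - n))" for t
  have "walk E ends vs es (n + m)"
    unfolding walk_def
  proof (intro allI impI)
    fix i assume i: "i < n + m"
    show "es i \<in> E \<and> (ends (es i) = (vs i, vs (Suc i)) \<or> ends (es i) = (vs (Suc i), vs i))"
    proof (cases "i < n")
      case True
      then show ?thesis using w1(1) unfolding walk_def by (auto simp: vs_def es_def)
    next
      case False
      hence im: "i - n < m" using i by simp
      have vi: "vs i = vs2 (i - n)" using False w1(3) w2(2) by (auto simp: vs_def)
      have vsi: "vs (Suc i) = vs2 (Suc (i - n))" using False by (auto simp: vs_def Suc_diff_le)
      show ?thesis using w2(1) im False unfolding walk_def by (auto simp: es_def vi vsi)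
    qed
  qed
  moreover have "vs 0 = x" using w1 by (simp add: vs_def)
  moreover have "vs (n + m) = z" using w1 w2 by (auto simp: vs_def)
  ultimately show ?thesis unfolding wlk_def by blast
qed

lemma wlk_rev:
  assumes "wlk E ends x y n"
  shows "wlk E ends y x n"
proof -
  obtain vs es where w: "walk E ends vs es n" "vs 0 = x" "vs n = y"
    using assms unfolding wlk_def by blast
  define vs' where "vs' t = vs (n - t)" for t
  define es' where "es' t = es (n - Suc t)" for t
  have "walk E ends vs' es' n"
    unfolding walk_def
  proof (intro allI impI)
    fix i assume i: "i < n"
    have j: "n - Suc i < n" using i by simp
    have "Suc (n - Suc i) = n - i" using i by simp
    then show "es' i \<in> E \<and> (ends (es' i) = (vs' i, vs' (Suc i)) \<or> ends (es' i) = (vs' (Suc i), vs' i))"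
      using w(1) j unfolding walk_def vs'_def es'_def by (metis diff_Suc_Suc)
  qed
  then show ?thesis unfolding wlk_def using w by (auto simp: vs'_def)
qed

lemma wlk_sub:
  assumes "walk E ends vs es n" "i \<le> j" "j \<le> n"
  shows "wlk E ends (vs i) (vs j) (j - i)"
proof -
  have "walk E ends (\<lambda>t. vs (i + t)) (\<lambda>t. es (i + t)) (j - i)"
    using assms unfolding walk_def by auto
  then show ?thesis unfolding wlk_def using assms(2)
    by (intro exI[of _ "\<lambda>t. vs (i + t)"] exI[of _ "\<lambda>t. es (i + t)"]) auto
qed

lemma rtrancl_wlk:
  assumes "(x, y) \<in> (adj E ends)\<^sup>*"
  shows "\<exists>n. wlk E ends x y n"
  using assms
proof (induction rule: rtrancl_induct)
  case base
  show ?case by (rule exI[of _ 0], rule wlk_refl)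
next
  case (step y z)
  then obtain n where n: "wlk E ends x y n" by blast
  from step(2) obtain e where "e \<in> E" "ends e = (y, z) \<or> ends e = (z, y)"
    unfolding adj_def by blast
  hence "wlk E ends y z 1" by (rule wlk_edge)
  then show ?case using wlk_append[OF n] by blast
qed

lemma nonbip_odd_closed:
  assumes G: "graph V E ends" and nb: "\<not> bipartite V E ends"
  shows "\<exists>x n. odd n \<and> wlk E ends x x n"
proof (rule ccontr)
  assume "\<not> ?thesis"
  hence H: "\<And>x n. wlk E ends x x n \<Longrightarrow> even n" by blast
  define conn where "conn u v = (\<exists>n. wlk E ends u v n)" for u v
  define rep where "rep v = (SOME u. conn u v)" for v
  have conn_sym: "conn u v \<Longrightarrow> conn v u" for u v unfolding conn_def by (metis wlk_rev)
  have conn_trans: "conn u v \<Longrightarrow> conn v w \<Longrightarrow> conn u w" for u v w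
    unfolding conn_def by (metis wlk_append)
  have rep_conn: "conn (rep v) v" for v
  proof -
    have "conn v v" unfolding conn_def by (rule exI[of _ 0], rule wlk_refl)
    then show ?thesis unfolding rep_def by (rule someI)
  qed
  have rep_eq: "conn v v' \<Longrightarrow> rep v = rep v'" for v v'
  proof -
    assume c: "conn v v'"
    have "(\<lambda>u. conn u v) = (\<lambda>u. conn u v')"
      using c conn_trans conn_sym by blast
    then show ?thesis unfolding rep_def by simp
  qed
  define A where "A = {v \<in> V. \<exists>n. even n \<and> wlk E ends (rep v) v n}"
  have "\<forall>e\<in>E. (fst (ends e) \<in> A) \<noteq> (snd (ends e) \<in> A)"
  proof
    fix e assume e: "e \<in> E"
    define x where "x = fst (ends e)"
    define y where "y = snd (ends e)"
    have xV: "x \<in> V" and yV: "y \<in> V" using G e unfolding graph_def x_def y_def by auto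
    have exy: "wlk E ends x y 1" using e by (intro wlk_edge[OF e]) (simp add: x_def y_def)
    have "conn x y" unfolding conn_def using exy by (rule exI)
    hence rr: "rep x = rep y" by (rule rep_eq)
    obtain n1 where n1: "wlk E ends (rep x) x n1" using rep_conn[of x] unfolding conn_def by (metis exE)
    obtain n2 where n2: "wlk E ends (rep y) y n2" using rep_conn[of y] unfolding conn_def by (metis exE)
    have cl: "wlk E ends (rep x) (rep x) (n1 + 1 + n2)"
      using wlk_append[OF wlk_append[OF n1 exy] wlk_rev[OF n2[unfolded rr[symmetric]]]] .
    hence ev: "even (n1 + 1 + n2)" by (rule H)
    show "(fst (ends e) \<in> A) \<noteq> (snd (ends e) \<in> A)"
    proof
      assume eq: "(fst (ends e) \<in> A) = (snd (ends e) \<in> A)"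
      show False
      proof (cases "x \<in> A")
        case True
        hence "y \<in> A" using eq by (simp add: x_def y_def)
        obtain m1 where "even m1" "wlk E ends (rep x) x m1" using True unfolding A_def by blast
        moreover obtain m2 where "even m2" "wlk E ends (rep y) y m2" using \<open>y \<in> A\<close> unfolding A_def by blast
        ultimately have "wlk E ends (rep x) (rep x) (m1 + 1 + m2)" "odd (m1 + 1 + m2)"
          using wlk_append[OF wlk_append[OF _ exy] wlk_rev] rr by auto
        then show False using H by blast
      next
        case False
        hence "y \<notin> A" using eq by (simp add: x_def y_def)
        have "odd n1" using False n1 xV unfolding A_def by blast
        moreover have "odd n2" using \<open>y \<notin> A\<close> n2 yV unfolding A_def by blast
        ultimately show False using ev by simp
      qed
    qed
  qed
  moreover have "A \<subseteq> V" unfolding A_def by blast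
  ultimately have "bipartite V E ends" unfolding bipartite_def by blast
  then show False using nb by simp
qed

lemma repeated_edge_n2:
  assumes w: "walk E ends vs es n" and cl: "vs n = vs 0" and inj: "inj_on vs {..<n}"
    and ij: "i < j" "j < n" and eq: "es i = es j"
  shows "n = 2"
proof -
  have ei: "ends (es i) = (vs i, vs (Suc i)) \<or> ends (es i) = (vs (Suc i), vs i)"
    using w ij unfolding walk_def by auto
  have ej: "ends (es j) = (vs j, vs (Suc j)) \<or> ends (es j) = (vs (Suc j), vs j)"
    using w ij unfolding walk_def by auto
  have nij: "vs i \<noteq> vs j" using inj ij by (auto dest: inj_onD)
  have c: "vs i = vs (Suc j) \<and> vs (Suc i) = vs j" using ei ej eq nij by auto
  have sj: "Suc j = n"
  proof (rule ccontr)
    assume "Suc j \<noteq> n"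
    hence "Suc j < n" using ij by simp
    hence "i = Suc j" using c inj ij by (auto dest: inj_onD)
    then show False using ij by simp
  qed
  have "vs i = vs 0" using c sj cl by simp
  hence i0: "i = 0" using inj ij by (auto dest: inj_onD)
  have "vs (Suc 0) = vs j" using c i0 by simp
  moreover have "Suc 0 < n" using ij i0 by simp
  ultimately have "j = Suc 0" using inj ij by (auto dest: inj_onD)
  then show ?thesis using sj by simp
qed

lemma odd_closed_cycle:
  "wlk E ends x x n \<Longrightarrow> odd n \<Longrightarrow> \<exists>k. odd k \<and> has_cycle E ends k"
proof (induction n arbitrary: x rule: less_induct)
  case (less n)
  obtain vs es where w: "walk E ends vs es n" "vs 0 = x" "vs n = x"
    using less.prems(1) unfolding wlk_def by blast
  show ?case
  proof (cases "\<exists>i j. i < j \<and> j < n \<and> vs i = vs j")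
    case True
    then obtain i j where ij: "i < j" "j < n" "vs i = vs j" by blast
    have W1: "wlk E ends (vs i) (vs i) (j - i)"
      using wlk_sub[OF w(1), of i j] ij by simp
    have W2a: "wlk E ends (vs j) (vs n) (n - j)" using wlk_sub[OF w(1), of j n] ij by simp
    have W2b: "wlk E ends (vs 0) (vs i) i" using wlk_sub[OF w(1), of 0 i] ij by simp
    have W2: "wlk E ends (vs i) (vs i) (n - j + i)"
      using wlk_append[OF W2a] W2b w(2,3) ij(3) by simp
    show ?thesis
    proof (cases "odd (j - i)")
      case True
      then show ?thesis using less.IH[of "j - i" "vs i"] W1 ij by simp
    next
      case False
      have "n = (j - i) + (n - j + i)" using ij by simp
      hence "odd (n - j + i)" using False less.prems(2) by (metis odd_add)
      then show ?thesis using less.IH[of "n - j + i" "vs i"] W2 ij by simp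
    qed
  next
    case False
    have inj: "inj_on vs {..<n}"
    proof (rule inj_onI)
      fix a b assume ab: "a \<in> {..<n}" "b \<in> {..<n}" "vs a = vs b"
      show "a = b"
      proof (rule ccontr)
        assume "a \<noteq> b"
        hence "a < b \<or> b < a" by arith
        then show False using False ab by (metis lessThan_iff)
      qed
    qed
    show ?thesis
    proof (cases "inj_on es {..<n}")
      case True
      have "has_cycle E ends n"
        unfolding has_cycle_def
      proof (intro conjI exI)
        show "1 \<le> n" using less.prems(2) by (cases n) auto
        show "inj_on vs {..<n}" by (rule inj)
        show "inj_on es {..<n}" by (rule True)
        show "\<forall>i<n. es i \<in> E \<and>
            (ends (es i) = (vs i, vs (Suc i mod n)) \<or> ends (es i) = (vs (Suc i mod n), vs i))"
        proof (intro allI impI)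
          fix i assume i: "i < n"
          have "vs (Suc i mod n) = vs (Suc i)"
          proof (cases "Suc i < n")
            case True then show ?thesis by simp
          next
            case False
            hence "Suc i = n" using i by simp
            then show ?thesis using w(2,3) by simp
          qed
          then show "es i \<in> E \<and>
            (ends (es i) = (vs i, vs (Suc i mod n)) \<or> ends (es i) = (vs (Suc i mod n), vs i))"
            using w(1) i unfolding walk_def by simp
        qed
      qed
      then show ?thesis using less.prems(2) by blast
    next
      case False
      then obtain a b where ab: "a < n" "b < n" "a \<noteq> b" "es a = es b"
        unfolding inj_on_def by auto
      have cl: "vs n = vs 0" using w by simp
      have "n = 2"
      proof (cases "a < b")
        case True
        show ?thesis using repeated_edge_n2[OF w(1) cl inj True ab(2) ab(4)] by simp
      next
        case False
        hence "b < a" using ab(3) by simp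
        then show ?thesis using repeated_edge_n2[OF w(1) cl inj _ ab(1)] ab(4) by simp
      qed
      then show ?thesis using less.prems(2) by simp
    qed
  qed
qed

definition bd :: "'e set \<Rightarrow> ('e \<Rightarrow> 'v \<times> 'v) \<Rightarrow> ('e \<Rightarrow> real) \<Rightarrow> 'v \<Rightarrow> real" where
  "bd E ends P v = (\<Sum>e\<in>{e\<in>E. snd (ends e) = v}. P e) - (\<Sum>e\<in>{e\<in>E. fst (ends e) = v}. P e)"

lemma bd_add: "bd E ends (\<lambda>e. P e + Q e) v = bd E ends P v + bd E ends Q v"
  by (simp add: bd_def sum.distrib)

lemma bd_diff: "bd E ends (\<lambda>e. P e - Q e) v = bd E ends P v - bd E ends Q v"
  by (simp add: bd_def sum_subtractf)

lemma bd_scale: "bd E ends (\<lambda>e. c * P e) v = c * bd E ends P v"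
  by (simp add: bd_def sum_distrib_left right_diff_distrib)

lemma bd_zero: "bd E ends (\<lambda>e. 0) v = 0"
  by (simp add: bd_def)

lemma bd_ind:
  assumes "finite E" "e0 \<in> E"
  shows "bd E ends (\<lambda>e. if e = e0 then 1 else 0) v
       = (if snd (ends e0) = v then 1 else 0) - (if fst (ends e0) = v then 1 else 0)"
  using assms by (simp add: bd_def sum.delta')

lemma path_flow:
  assumes fin: "finite E" and p: "(x, y) \<in> (adj (E - {e0}) ends)\<^sup>*"
  shows "\<exists>P. P e0 = 0 \<and> (\<forall>v. bd E ends P v = (if y = v then 1 else 0) - (if x = v then 1 else 0))"
  using p
proof (induction rule: rtrancl_induct)
  case base
  show ?case by (rule exI[of _ "\<lambda>e. 0"]) (simp add: bd_zero)
next
  case (step y z)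
  then obtain P where P: "P e0 = 0" "\<forall>v. bd E ends P v = (if y = v then 1 else 0) - (if x = v then 1 else 0)"
    by blast
  from step(2) obtain e where e: "e \<in> E" "e \<noteq> e0" "ends e = (y, z) \<or> ends e = (z, y)"
    unfolding adj_def by blast
  show ?case
  proof (cases "ends e = (y, z)")
    case True
    define P' where "P' e' = P e' + (if e' = e then 1 else 0)" for e'
    have "bd E ends P' v = (if z = v then 1 else 0) - (if x = v then 1 else 0)" for v
      unfolding P'_def bd_add bd_ind[OF fin e(1)] using P(2) True by auto
    moreover have "P' e0 = 0" using P e by (simp add: P'_def)
    ultimately show ?thesis by blast
  next
    case False
    hence F: "ends e = (z, y)" using e by simp
    define P' where "P' e' = P e' - (if e' = e then 1 else 0)" for e'
    have "bd E ends P' v = (if z = v then 1 else 0) - (if x = v then 1 else 0)" for v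
      unfolding P'_def bd_diff bd_ind[OF fin e(1)] using P(2) F by auto
    moreover have "P' e0 = 0" using P e by (simp add: P'_def)
    ultimately show ?thesis by blast
  qed
qed

lemma circ_through:
  assumes G: "graph V E ends" and bl: "bridgeless E ends" and e0: "e0 \<in> E"
  shows "\<exists>C. C e0 = 1 \<and> (\<forall>v. bd E ends C v = 0)"
proof -
  have fin: "finite E" using G by (simp add: graph_def)
  have "\<not> is_bridge E ends e0" using bl e0 by (simp add: bridgeless_def)
  hence "ends e0 \<in> (adj (E - {e0}) ends)\<^sup>*" using e0 by (simp add: is_bridge_def)
  hence "(fst (ends e0), snd (ends e0)) \<in> (adj (E - {e0}) ends)\<^sup>*" by simp
  from path_flow[OF fin this] obtain P where P: "P e0 = 0"
    "\<forall>v. bd E ends P v = (if snd (ends e0) = v then 1 else 0) - (if fst (ends e0) = v then 1 else 0)"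
    by blast
  define C where "C = (\<lambda>e. (if e = e0 then 1 else 0) - P e)"
  have "bd E ends C v = 0" for v
    unfolding C_def bd_diff bd_ind[OF fin e0] using P(2) by simp
  moreover have "C e0 = 1" using P by (simp add: C_def)
  ultimately show ?thesis by blast
qed

lemma nowhere_zero_circ:
  assumes G: "graph V E ends" and bl: "bridgeless E ends"
  shows "\<exists>F. (\<forall>v. bd E ends F v = 0) \<and> (\<forall>e\<in>E. F e \<noteq> 0)"
proof -
  have fin: "finite E" using G by (simp add: graph_def)
  have "D \<subseteq> E \<Longrightarrow> \<exists>F. (\<forall>v. bd E ends F v = 0) \<and> (\<forall>e\<in>D. F e \<noteq> 0)" for D
  proof (induction D rule: infinite_finite_induct)
    case (infinite D)
    hence False using fin finite_subset by blast
    then show ?case ..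
  next
    case empty
    show ?case by (rule exI[of _ "\<lambda>e. 0"]) (simp add: bd_zero)
  next
    case (insert e D)
    then obtain F where F: "\<forall>v. bd E ends F v = 0" "\<forall>e\<in>D. F e \<noteq> 0" by blast
    have eE: "e \<in> E" using insert by simp
    obtain C where C: "C e = 1" "\<forall>v. bd E ends C v = 0" using circ_through[OF G bl eE] by blast
    define Bad where "Bad = (\<lambda>e'. - F e' / C e') ` insert e D"
    have "finite Bad" using insert by (simp add: Bad_def)
    then obtain t where t: "t \<notin> Bad" using ex_new_if_finite[OF infinite_UNIV_char_0] by blast
    define F' where "F' = (\<lambda>e'. F e' + t * C e')"
    have "bd E ends F' v = 0" for v unfolding F'_def bd_add bd_scale using F C by simp
    moreover have "F' e' \<noteq> 0" if e': "e' \<in> insert e D" for e'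
    proof (cases "C e' = 0")
      case True
      hence "e' \<noteq> e" using C by auto
      hence "e' \<in> D" using e' by simp
      then show ?thesis using F True by (simp add: F'_def)
    next
      case False
      show ?thesis
      proof
        assume "F' e' = 0"
        hence "t = - F e' / C e'" using False by (simp add: F'_def field_simps)
        hence "t \<in> Bad" using e' by (auto simp: Bad_def)
        then show False using t by simp
      qed
    qed
    ultimately show ?case by blast
  qed
  then show ?thesis by blast
qed

lemma flow_exists:
  fixes V :: "'v set" and E :: "'e set" and ends :: "'e \<Rightarrow> 'v \<times> 'v"
  assumes G: "graph V E ends" and bl: "bridgeless E ends"
  shows "\<exists>r ori \<phi>. 2 \<le> r \<and> complex_nz_flow V E ends r ori \<phi>"
proof -
  have fin: "finite E" using G by (simp add: graph_def)
  obtain F where F: "\<forall>v. bd E ends F v = 0" "\<forall>e\<in>E. F e \<noteq> 0" using nowhere_zero_circ[OF G bl] by blast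
  define ori :: "'e \<Rightarrow> bool" where "ori = (\<lambda>_. True)"
  have hd: "head ends ori e = snd (ends e)" for e by (simp add: head_def ori_def)
  have tl: "tail ends ori e = fst (ends e)" for e by (simp add: tail_def ori_def)
  show ?thesis
  proof (cases "E = {}")
    case True
    have fl: "complex_nz_flow V E ends 2 ori (\<lambda>_. 0)" using True by (simp add: complex_nz_flow_def)
    show ?thesis by (rule exI[of _ 2], rule exI[of _ ori], rule exI[of _ "\<lambda>_. 0"], rule conjI[OF _ fl]) simp
  next
    case False
    define m where "m = Min ((\<lambda>e. \<bar>F e\<bar>) ` E)"
    define M where "M = Max ((\<lambda>e. \<bar>F e\<bar>) ` E)"
    have mle: "m \<le> \<bar>F e\<bar>" if "e \<in> E" for e using fin that by (simp add: m_def)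
    have Mge: "\<bar>F e\<bar> \<le> M" if "e \<in> E" for e using fin that by (simp add: M_def)
    have "m \<in> (\<lambda>e. \<bar>F e\<bar>) ` E" unfolding m_def using fin False by (intro Min_in) auto
    then obtain e0 where e0: "e0 \<in> E" "m = \<bar>F e0\<bar>" by blast
    have m0: "0 < m" using e0 F(2) by simp
    obtain e1 where e1: "e1 \<in> E" using False by blast
    have mM: "m \<le> M" using mle[OF e1] Mge[OF e1] by simp
    define r where "r = M / m + 1"
    have "1 \<le> M / m" using mM m0 by (simp add: le_divide_eq)
    hence r2: "2 \<le> r" by (simp add: r_def)
    define \<phi> where "\<phi> e = complex_of_real (F e / m)" for e
    have fl: "complex_nz_flow V E ends r ori \<phi>"
      unfolding complex_nz_flow_def
    proof (intro conjI ballI)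
      fix e assume e: "e \<in> E"
      have nm: "cmod (\<phi> e) = \<bar>F e\<bar> / m" using m0 unfolding \<phi>_def norm_of_real by simp
      show "1 \<le> cmod (\<phi> e)" unfolding nm using mle[OF e] m0 by (simp add: field_simps)
      show "cmod (\<phi> e) \<le> r - 1" unfolding nm using Mge[OF e] m0 by (simp add: r_def divide_right_mono)
    next
      fix v assume "v \<in> V"
      have "(\<Sum>e\<in>{e\<in>E. snd (ends e) = v}. F e) = (\<Sum>e\<in>{e\<in>E. fst (ends e) = v}. F e)"
        using F(1) by (simp add: bd_def)
      hence rs: "(\<Sum>e\<in>{e\<in>E. snd (ends e) = v}. F e / m) = (\<Sum>e\<in>{e\<in>E. fst (ends e) = v}. F e / m)"
        by (simp add: sum_divide_distrib[symmetric])
      show "(\<Sum>e\<in>{e\<in>E. head ends ori e = v}. \<phi> e) = (\<Sum>e\<in>{e\<in>E. tail ends ori e = v}. \<phi> e)"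
        using arg_cong[OF rs, of complex_of_real] unfolding hd tl \<phi>_def by simp
    qed
    show ?thesis by (rule exI[of _ r], rule exI[of _ ori], rule exI[of _ \<phi>], rule conjI[OF r2 fl])
  qed
qed

lemma cycle_local:
  fixes V :: "'v set" and E :: "'e set" and ends :: "'e \<Rightarrow> 'v \<times> 'v"
  assumes cub: "cubic V E ends" and fl: "complex_nz_flow V E ends r ori \<phi>"
    and vsi: "inj_on vs {..<g}" and esi: "inj_on es {..<g}" and g3: "3 \<le> g"
    and cyc: "\<forall>i<g. es i \<in> E \<and> (ends (es i) = (vs i, vs (Suc i mod g)) \<or> ends (es i) = (vs (Suc i mod g), vs i))"
    and k: "k < g"
    and ft: "\<And>i. ft i = (if tail ends ori (es i) = vs i then \<phi> (es i) else - \<phi> (es i))"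
  shows "1 \<le> cmod (ft (Suc k mod g) - ft k) \<and> cmod (ft (Suc k mod g) - ft k) \<le> r - 1"
proof -
  have G: "graph V E ends" using cub by (simp add: cubic_def)
  have fin: "finite E" using G by (simp add: graph_def)
  define j where "j = Suc k mod g"
  define l where "l = Suc j mod g"
  have jg: "j < g" and lg: "l < g" using g3 by (simp_all add: j_def l_def)
  have sm: "Suc a mod g \<noteq> a" if "a < g" for a
  proof (cases "Suc a < g")
    case True then show ?thesis by simp
  next
    case False
    hence "Suc a = g" using that by simp
    then show ?thesis using g3 by auto
  qed
  have jk: "j \<noteq> k" using sm[OF k] by (simp add: j_def)
  have lj: "l \<noteq> j" using sm[OF jg] by (simp add: l_def)
  define v where "v = vs j"
  define ek where "ek = es k"
  define ej where "ej = es j"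
  have ekE: "ek \<in> E" and ejE: "ej \<in> E" using cyc k jg by (auto simp: ek_def ej_def)
  have ekj: "ek \<noteq> ej" using esi k jg jk by (auto simp: ek_def ej_def dest: inj_onD)
  have vk: "vs k \<noteq> v" using vsi k jg jk by (auto simp: v_def dest: inj_onD)
  have vl: "vs l \<noteq> v" using vsi lg jg lj by (auto simp: v_def dest: inj_onD)
  have ek_ends: "ends ek = (vs k, v) \<or> ends ek = (v, vs k)"
    using cyc k by (auto simp: ek_def v_def j_def)
  have ej_ends: "ends ej = (v, vs l) \<or> ends ej = (vs l, v)"
    using cyc jg by (auto simp: ej_def v_def l_def)
  have vV: "v \<in> V" using G ekE ek_ends unfolding graph_def by force
  define Fs where "Fs = {e\<in>E. fst (ends e) = v}"
  define Sn where "Sn = {e\<in>E. snd (ends e) = v}"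
  have finFS: "finite Fs" "finite Sn" using fin by (simp_all add: Fs_def Sn_def)
  have deg: "card Fs + card Sn = 3"
    using cub vV unfolding cubic_def degree_def Fs_def Sn_def by blast
  have ekI: "ek \<in> Fs \<union> Sn" and ejI: "ej \<in> Fs \<union> Sn"
    using ekE ejE ek_ends ej_ends by (auto simp: Fs_def Sn_def)
  have "fst (ends ek) \<noteq> snd (ends ek)" using ek_ends vk by auto
  hence ekN: "ek \<notin> Fs \<inter> Sn" by (auto simp: Fs_def Sn_def)
  have "fst (ends ej) \<noteq> snd (ends ej)" using ej_ends vl by auto
  hence ejN: "ej \<notin> Fs \<inter> Sn" by (auto simp: Fs_def Sn_def)
  have cu: "card Fs + card Sn = card (Fs \<union> Sn) + card (Fs \<inter> Sn)"
    using finFS by (rule card_Un_Int)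
  have noloop: "Fs \<inter> Sn = {}"
  proof (rule ccontr)
    assume "Fs \<inter> Sn \<noteq> {}"
    then obtain e where e: "e \<in> Fs \<inter> Sn" by blast
    have "{ek, ej, e} \<subseteq> Fs \<union> Sn" using ekI ejI e by auto
    moreover have "card {ek, ej, e} = 3"
    proof -
      have "e \<noteq> ek" "e \<noteq> ej" using e ekN ejN by auto
      then show ?thesis using ekj by simp
    qed
    ultimately have "3 \<le> card (Fs \<union> Sn)" using finFS by (metis card_mono finite_UnI)
    moreover have "1 \<le> card (Fs \<inter> Sn)" using e finFS
      by (metis One_nat_def Suc_leI card_gt_0_iff empty_iff finite_Int)
    ultimately show False using cu deg by simp
  qed
  define Inc where "Inc = Fs \<union> Sn"
  have finI: "finite Inc" using finFS by (simp add: Inc_def)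
  have cI: "card Inc = 3" using cu deg noloop by (simp add: Inc_def)
  have "card (Inc - {ek, ej}) = 1"
    using cI ekI ejI ekj finI by (simp add: Inc_def card_Diff_subset)
  then obtain e3 where e3: "Inc - {ek, ej} = {e3}" by (rule card_1_singletonE)
  have IncEq: "Inc = {ek, ej, e3}" using e3 ekI ejI by (auto simp: Inc_def)
  have e3n: "e3 \<noteq> ek" "e3 \<noteq> ej" using e3 by auto
  have e3E: "e3 \<in> E" using IncEq by (auto simp: Inc_def Fs_def Sn_def)
  define \<sigma> where "\<sigma> e = (if head ends ori e = v then \<phi> e else - \<phi> e)" for e
  have cons: "(\<Sum>e\<in>{e\<in>E. head ends ori e = v}. \<phi> e) = (\<Sum>e\<in>{e\<in>E. tail ends ori e = v}. \<phi> e)"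
    using fl vV unfolding complex_nz_flow_def by blast
  have ht: "(head ends ori e = fst (ends e) \<and> tail ends ori e = snd (ends e)) \<or>
             (head ends ori e = snd (ends e) \<and> tail ends ori e = fst (ends e))" for e
    by (simp add: head_def tail_def)
  have IncE: "Inc \<subseteq> E" by (auto simp: Inc_def Fs_def Sn_def)
  have Inc_iff: "e \<in> Inc \<longleftrightarrow> e \<in> E \<and> (fst (ends e) = v \<or> snd (ends e) = v)" for e
    by (auto simp: Inc_def Fs_def Sn_def)
  have nl: "e \<in> E \<Longrightarrow> \<not> (fst (ends e) = v \<and> snd (ends e) = v)" for e
    using noloop by (auto simp: Fs_def Sn_def)
  have H1: "Inc \<inter> {e. head ends ori e = v} = {e\<in>E. head ends ori e = v}"
  proof (intro set_eqI iffI)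
    fix e assume "e \<in> Inc \<inter> {e. head ends ori e = v}"
    then show "e \<in> {e\<in>E. head ends ori e = v}" using IncE by blast
  next
    fix e assume a: "e \<in> {e\<in>E. head ends ori e = v}"
    hence "fst (ends e) = v \<or> snd (ends e) = v" using ht[of e] by auto
    then show "e \<in> Inc \<inter> {e. head ends ori e = v}" using a Inc_iff by blast
  qed
  have H2: "Inc \<inter> - {e. head ends ori e = v} = {e\<in>E. tail ends ori e = v}"
  proof (intro set_eqI iffI)
    fix e assume a: "e \<in> Inc \<inter> - {e. head ends ori e = v}"
    hence eE: "e \<in> E" and o: "fst (ends e) = v \<or> snd (ends e) = v" and hv: "head ends ori e \<noteq> v"
      using Inc_iff by auto
    have "tail ends ori e = v" using ht[of e] o hv by auto
    then show "e \<in> {e\<in>E. tail ends ori e = v}" using eE by blast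
  next
    fix e assume a: "e \<in> {e\<in>E. tail ends ori e = v}"
    hence eE: "e \<in> E" and tv: "tail ends ori e = v" by auto
    have o: "fst (ends e) = v \<or> snd (ends e) = v" using ht[of e] tv by auto
    have "head ends ori e \<noteq> v" using ht[of e] tv nl[OF eE] by auto
    then show "e \<in> Inc \<inter> - {e. head ends ori e = v}" using eE o Inc_iff by blast
  qed
  have "(\<Sum>e\<in>Inc. \<sigma> e) = (\<Sum>e\<in>{e\<in>E. head ends ori e = v}. \<phi> e) + (\<Sum>e\<in>{e\<in>E. tail ends ori e = v}. - \<phi> e)"
    unfolding \<sigma>_def sum.If_cases[OF finI] H1 H2 ..
  hence s0: "(\<Sum>e\<in>Inc. \<sigma> e) = 0" using cons by (simp add: sum_negf)
  have "(\<Sum>e\<in>Inc. \<sigma> e) = \<sigma> ek + \<sigma> ej + \<sigma> e3"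
    unfolding IncEq using ekj e3n by (simp add: add.assoc)
  moreover have "\<sigma> ek = ft k"
  proof -
    have ftk: "ft k = (if tail ends ori ek = vs k then \<phi> ek else - \<phi> ek)" using ft[of k] by (simp add: ek_def)
    from ek_ends consider "ends ek = (vs k, v)" | "ends ek = (v, vs k)" by blast
    then show ?thesis by cases (use vk in \<open>auto simp: \<sigma>_def ftk head_def tail_def\<close>)
  qed
  moreover have "\<sigma> ej = - ft j"
  proof -
    have ftj: "ft j = (if tail ends ori ej = v then \<phi> ej else - \<phi> ej)" using ft[of j] by (simp add: ej_def v_def)
    from ej_ends consider "ends ej = (v, vs l)" | "ends ej = (vs l, v)" by blast
    then show ?thesis by cases (use vl in \<open>auto simp: \<sigma>_def ftj head_def tail_def\<close>)
  qed
  ultimately have "ft j - ft k = \<sigma> e3" using s0 by (simp add: algebra_simps)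
  moreover have "cmod (\<sigma> e3) = cmod (\<phi> e3)" by (simp add: \<sigma>_def)
  moreover have "1 \<le> cmod (\<phi> e3) \<and> cmod (\<phi> e3) \<le> r - 1" using fl e3E by (simp add: complex_nz_flow_def)
  ultimately show ?thesis by (simp add: j_def)
qed

lemma cycle_seq:
  fixes V :: "'v set" and E :: "'e set" and ends :: "'e \<Rightarrow> 'v \<times> 'v"
  assumes cub: "cubic V E ends" and fl: "complex_nz_flow V E ends r ori \<phi>"
    and hc: "has_cycle E ends g" and g3: "3 \<le> g"
  shows "\<exists>f. (\<forall>i. f (i + g) = f i) \<and> (\<forall>i. 1 \<le> cmod (f i)) \<and> (\<forall>i. cmod (f i) \<le> r - 1)
           \<and> (\<forall>i. 1 \<le> cmod (f (Suc i) - f i)) \<and> (\<forall>i. cmod (f (Suc i) - f i) \<le> r - 1)"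
proof -
  obtain vs es where vsi: "inj_on vs {..<g}" and esi: "inj_on es {..<g}"
    and cyc: "\<forall>i<g. es i \<in> E \<and> (ends (es i) = (vs i, vs (Suc i mod g)) \<or> ends (es i) = (vs (Suc i mod g), vs i))"
    using hc unfolding has_cycle_def by blast
  define ft where "ft i = (if tail ends ori (es i) = vs i then \<phi> (es i) else - \<phi> (es i))" for i
  define f where "f i = ft (i mod g)" for i
  have g0: "0 < g" using g3 by simp
  have per: "f (i + g) = f i" for i by (simp add: f_def)
  have nf: "cmod (f i) = cmod (\<phi> (es (i mod g)))" for i by (simp add: f_def ft_def)
  have inE: "es (i mod g) \<in> E" for i using cyc g0 by simp
  have b1: "1 \<le> cmod (f i)" and b2: "cmod (f i) \<le> r - 1" for i
    using fl inE[of i] unfolding nf complex_nz_flow_def by blast+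
  have d: "1 \<le> cmod (f (Suc i) - f i) \<and> cmod (f (Suc i) - f i) \<le> r - 1" for i
  proof -
    have "f (Suc i) = ft (Suc (i mod g) mod g)" by (simp add: f_def mod_Suc_eq)
    moreover have "f i = ft (i mod g)" by (simp add: f_def)
    ultimately show ?thesis
      using cycle_local[OF cub fl vsi esi g3 cyc _ ft_def, of "i mod g"] g0 by simp
  qed
  show ?thesis using per b1 b2 d by blast
qed

theorem theorem2:
  fixes V :: "'v set" and E :: "'e set" and ends :: "'e \<Rightarrow> 'v \<times> 'v"
  assumes "cubic V E ends"
    and "bridgeless E ends"
    and "\<not> bipartite V E ends"
  defines "g \<equiv> odd_girth E ends"
  shows "(g mod 6 = 1 \<or> g mod 6 = 3 \<longrightarrow>
           complex_flow_number V E ends \<ge> 1 + 2 * sin (pi / 6 * (real g / (real g - 1))))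
       \<and> (g mod 6 = 5 \<longrightarrow>
           complex_flow_number V E ends \<ge> 1 + 2 * sin (pi / 6 * ((real g + 1) / real g)))"
proof -
  have cub: "cubic V E ends" and bl: "bridgeless E ends" and nb: "\<not> bipartite V E ends"
    using assms by auto
  have G: "graph V E ends" using cub by (simp add: cubic_def)
  from nonbip_odd_closed[OF G nb] obtain x n where xn: "odd n \<and> wlk E ends x x n" by (elim exE)
  have "\<exists>k. odd k \<and> has_cycle E ends k" using odd_closed_cycle[of E ends x n] xn by (elim conjE) simp
  hence gp: "odd g \<and> has_cycle E ends g" unfolding g_def odd_girth_def by (rule LeastI_ex)
  have g1: "1 \<le> g" using gp by (simp add: has_cycle_def)
  define S where "S = {r. r \<ge> 2 \<and> (\<exists>ori \<phi>. complex_nz_flow V E ends r ori \<phi>)}"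
  have Sne: "S \<noteq> {}" using flow_exists[OF G bl] by (auto simp: S_def)
  have cfn: "complex_flow_number V E ends = Inf S" by (simp add: complex_flow_number_def S_def)
  have key: "(g mod 6 = 1 \<or> g mod 6 = 3 \<longrightarrow> 1 + 2 * sin (pi / 6 * (real g / (real g - 1))) \<le> r)
       \<and> (g mod 6 = 5 \<longrightarrow> 1 + 2 * sin (pi / 6 * ((real g + 1) / real g)) \<le> r)" if rS: "r \<in> S" for r
  proof -
    obtain ori \<phi> where r2: "2 \<le> r" and fl: "complex_nz_flow V E ends r ori \<phi>" using rS by (auto simp: S_def)
    show ?thesis
    proof (cases "g = 1")
      case True
      then show ?thesis using r2 by simp
    next
      case False
      have og: "odd g" using gp by simp
      have g3: "3 \<le> g" using False og g1 by presburger
      obtain f where per: "\<forall>i. f (i + g) = f i" and b1: "\<forall>i. 1 \<le> cmod (f i)" and b2: "\<forall>i. cmod (f i) \<le> r - 1"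
        and d1: "\<forall>i. 1 \<le> cmod (f (Suc i) - f i)" and d2: "\<forall>i. cmod (f (Suc i) - f i) \<le> r - 1"
        using cycle_seq[OF cub fl _ g3] gp by blast
      note gm = geo_main[of g f "r - 1"]
      have A: "g mod 6 = 1 \<or> g mod 6 = 3 \<Longrightarrow> 2 * sin (pi / 6 * (real g / (real g - 1))) \<le> r - 1"
        by (rule gm(1)) (use gp g3 per b1 b2 d1 d2 in auto)
      have B: "g mod 6 = 5 \<Longrightarrow> 2 * sin (pi / 6 * ((real g + 1) / real g)) \<le> r - 1"
        by (rule gm(2)) (use gp g3 per b1 b2 d1 d2 in auto)
      show ?thesis using A B by auto
    qed
  qed
  show ?thesis
  proof (intro conjI impI)
    assume h: "g mod 6 = 1 \<or> g mod 6 = 3"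
    show "complex_flow_number V E ends \<ge> 1 + 2 * sin (pi / 6 * (real g / (real g - 1)))"
      unfolding cfn using Sne key h by (intro cInf_greatest) auto
  next
    assume h: "g mod 6 = 5"
    show "complex_flow_number V E ends \<ge> 1 + 2 * sin (pi / 6 * ((real g + 1) / real g))"
      unfolding cfn using Sne key h by (intro cInf_greatest) auto
  qed
qed

end
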